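(* Let $(G,u,v)$ be a rigidly marked theta graph $G=\theta_{n_0,n_1,n_2}$, let $D$ be a divisor of degree $2$ on $G$, and for $t\in\mathbb Z$ set $D'_t=D+t(u-v)$. Then for every $t\in\mathbb Z$, $$\tau^{u,v}_D(t)=\begin{cases} t-2 & \text{if } D'_t\sim 2u,\\ t-1 & \text{if } D'_t\sim u+w \text{ for some vertex } w\ne u,v,\\ t+1 & \text{if } D'_t\sim v+w \text{ for some vertex } w\ne \bar u,\bar v,\\ t+2 & \text{if } D'_t\sim v+\bar u,\\ t & \text{otherwise.}\end{cases}$$
   Context: A graph is a finite, connected, loopless multigraph (parallel edges allowed). A divisor is an element of the free abelian group on $V(G)$. Linear equivalence $\sim$ is generated by chip-firing (firing $w$ subtracts $\mathrm{val}(w)$ chips from $w$ and adds to each other vertex the number of edges joining it to $w$). The rank $r(D)$ is $-1$ if $D$ is not equivalent to an effective divisor, else the largest $r\ge0$ such that $D-E$ is equivalent to an effective divisor for every effective $E$ of degree $r$. $\delta(P)$ is $1$ if $P$ holds and $0$ otherwise. A twice-marked graph $(G,u,v)$ is a graph with two chosen vertices. A twist of $D$ is $D+au+bv$. $\Delta(D)=r(D)-r(D-u)-r(D-v)+r(D-u-v)$. $D$ is submodular if $\Delta(D')\ge0$ for all twists $D'$. If $D$ is submodular, its transmission permutation $\tau^{u,v}_D$ is the unique bijection $\mathbb Z\to\mathbb Z$ with $\delta(\tau^{u,v}_D(b)=a)=\Delta(D+au-bv)$ for all $a,b$. $(G,u,v)$ is rigidly marked if every divisor on $G$ is submodular and $r(u+v)=0$.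 The theta graph $\theta_{n_0,n_1,n_2}$ is obtained by joining two vertices by three internally disjoint paths of lengths $n_0,n_1,n_2\ge1$ (genus $2$). Its vertices are labelled $v_{\alpha,i}$ ($0\le\alpha\le2$, $0\le i\le n_\alpha$), $v_{\alpha,i}$ at distance $i$ from $v_{0,0}$ along path $\alpha$; $v_{\alpha,0}=v_{0,0}$, $v_{\alpha,n_\alpha}=v_{0,n_0}$. For a vertex $v_{\alpha,i}$ set $\overline{v_{\alpha,i}}=v_{\alpha,n_\alpha-i}$ (well defined; it satisfies $\overline{w}\sim K_G-w$ where $K_G=\sum_w(\mathrm{val}(w)-2)w$). *)

theory Defs
  imports Main "HOL-Library.Function_Algebras"
begin

text \<open>A multigraph is given by a finite vertex set V and a symmetric edge-multiplicity
  function m (m x y = number of edges joining x and y; zero outside V and on the diagonal).\<close>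

definition is_div :: "'v set \<Rightarrow> ('v \<Rightarrow> int) \<Rightarrow> bool" where
  "is_div V D \<longleftrightarrow> (\<forall>x. x \<notin> V \<longrightarrow> D x = 0)"

definition effective :: "('v \<Rightarrow> int) \<Rightarrow> bool" where
  "effective D \<longleftrightarrow> (\<forall>x. D x \<ge> 0)"

definition deg :: "'v set \<Rightarrow> ('v \<Rightarrow> int) \<Rightarrow> int" where
  "deg V D = (\<Sum>x\<in>V. D x)"

definition chip :: "'v \<Rightarrow> 'v \<Rightarrow> int" where
  "chip w = (\<lambda>x. if x = w then 1 else 0)"

definition val :: "'v set \<Rightarrow> ('v \<Rightarrow> 'v \<Rightarrow> nat) \<Rightarrow> 'v \<Rightarrow> nat" where
  "val V m w = (\<Sum>y\<in>V. m w y)"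

definition fire :: "'v set \<Rightarrow> ('v \<Rightarrow> 'v \<Rightarrow> nat) \<Rightarrow> 'v \<Rightarrow> ('v \<Rightarrow> int) \<Rightarrow> ('v \<Rightarrow> int)" where
  "fire V m w D = (\<lambda>x. if x = w then D x - int (val V m w) else D x + int (m x w))"

definition lin_equiv :: "'v set \<Rightarrow> ('v \<Rightarrow> 'v \<Rightarrow> nat) \<Rightarrow> ('v \<Rightarrow> int) \<Rightarrow> ('v \<Rightarrow> int) \<Rightarrow> bool" where
  "lin_equiv V m = equivclp (\<lambda>D D'. \<exists>w\<in>V. D' = fire V m w D)"

definition equiv_eff :: "'v set \<Rightarrow> ('v \<Rightarrow> 'v \<Rightarrow> nat) \<Rightarrow> ('v \<Rightarrow> int) \<Rightarrow> bool" where
  "equiv_eff V m D \<longleftrightarrow> (\<exists>F. is_div V F \<and> effective F \<and> lin_equiv V m D F)"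

definition rank :: "'v set \<Rightarrow> ('v \<Rightarrow> 'v \<Rightarrow> nat) \<Rightarrow> ('v \<Rightarrow> int) \<Rightarrow> int" where
  "rank V m D =
    (if \<not> equiv_eff V m D then -1
     else int (GREATEST r::nat. \<forall>E. is_div V E \<and> effective E \<and> deg V E = int r
                                   \<longrightarrow> equiv_eff V m (D - E)))"

definition Delta :: "'v set \<Rightarrow> ('v \<Rightarrow> 'v \<Rightarrow> nat) \<Rightarrow> 'v \<Rightarrow> 'v \<Rightarrow> ('v \<Rightarrow> int) \<Rightarrow> int" where
  "Delta V m u v D = rank V m D - rank V m (D - chip u) - rank V m (D - chip v)
                     + rank V m (D - chip u - chip v)"

definition submodular :: "'v set \<Rightarrow> ('v \<Rightarrow> 'v \<Rightarrow> nat) \<Rightarrow> 'v \<Rightarrow> 'v \<Rightarrow> ('v \<Rightarrow> int) \<Rightarrow> bool" where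
  "submodular V m u v D \<longleftrightarrow>
     (\<forall>a b::int. Delta V m u v (D + (\<lambda>x. a * chip u x) + (\<lambda>x. b * chip v x)) \<ge> 0)"

definition transmission :: "'v set \<Rightarrow> ('v \<Rightarrow> 'v \<Rightarrow> nat) \<Rightarrow> 'v \<Rightarrow> 'v \<Rightarrow> ('v \<Rightarrow> int) \<Rightarrow> int \<Rightarrow> int" where
  "transmission V m u v D = (THE \<tau>. bij \<tau> \<and>
      (\<forall>a b::int. (if \<tau> b = a then 1 else 0) = Delta V m u v (D + (\<lambda>x. a * chip u x) - (\<lambda>x. b * chip v x))))"

definition rigidly_marked :: "'v set \<Rightarrow> ('v \<Rightarrow> 'v \<Rightarrow> nat) \<Rightarrow> 'v \<Rightarrow> 'v \<Rightarrow> bool" where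
  "rigidly_marked V m u v \<longleftrightarrow>
     (\<forall>D. is_div V D \<longrightarrow> submodular V m u v D) \<and> rank V m (chip u + chip v) = 0"

text \<open>Vertices of theta(n0,n1,n2) are labelled by pairs of naturals: v_{alpha,i} is
  (0,0) if i = 0, (0,n0) if i = n_alpha, and (alpha,i) otherwise.\<close>

definition th_len :: "nat \<Rightarrow> nat \<Rightarrow> nat \<Rightarrow> nat \<Rightarrow> nat" where
  "th_len n0 n1 n2 \<alpha> = (if \<alpha> = 0 then n0 else if \<alpha> = 1 then n1 else n2)"

definition th_vtx :: "nat \<Rightarrow> nat \<Rightarrow> nat \<Rightarrow> nat \<Rightarrow> nat \<Rightarrow> nat \<times> nat" where
  "th_vtx n0 n1 n2 \<alpha> i =
     (if i = 0 then (0,0) else if i = th_len n0 n1 n2 \<alpha> then (0, n0) else (\<alpha>, i))"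

definition th_V :: "nat \<Rightarrow> nat \<Rightarrow> nat \<Rightarrow> (nat \<times> nat) set" where
  "th_V n0 n1 n2 = {th_vtx n0 n1 n2 \<alpha> i | \<alpha> i. \<alpha> < 3 \<and> i \<le> th_len n0 n1 n2 \<alpha>}"

definition th_mult :: "nat \<Rightarrow> nat \<Rightarrow> nat \<Rightarrow> nat \<times> nat \<Rightarrow> nat \<times> nat \<Rightarrow> nat" where
  "th_mult n0 n1 n2 x y = card {(\<alpha>, i). \<alpha> < 3 \<and> i < th_len n0 n1 n2 \<alpha> \<and>
        {x, y} = {th_vtx n0 n1 n2 \<alpha> i, th_vtx n0 n1 n2 \<alpha> (Suc i)}}"

definition th_bar :: "nat \<Rightarrow> nat \<Rightarrow> nat \<Rightarrow> nat \<times> nat \<Rightarrow> nat \<times> nat" where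
  "th_bar n0 n1 n2 x = (SOME y. \<exists>\<alpha> i. \<alpha> < 3 \<and> i \<le> th_len n0 n1 n2 \<alpha> \<and>
        x = th_vtx n0 n1 n2 \<alpha> i \<and> y = th_vtx n0 n1 n2 \<alpha> (th_len n0 n1 n2 \<alpha> - i))"

end

theory Submission
  imports Defs
begin


definition Lap :: "'v set \<Rightarrow> ('v \<Rightarrow> 'v \<Rightarrow> nat) \<Rightarrow> 'v \<Rightarrow> 'v \<Rightarrow> int" where
  "Lap V m w = (\<lambda>x. if x = w then - int (val V m w) else int (m x w))"

definition LS :: "'v set \<Rightarrow> ('v \<Rightarrow> 'v \<Rightarrow> nat) \<Rightarrow> ('v \<Rightarrow> int) \<Rightarrow> 'v \<Rightarrow> int" where
  "LS V m f = (\<lambda>x. \<Sum>w\<in>V. f w * Lap V m w x)"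

definition sm :: "int \<Rightarrow> ('v \<Rightarrow> int) \<Rightarrow> 'v \<Rightarrow> int" where
  "sm k A = (\<lambda>x. k * A x)"

lemma fire_Lap: "fire V m w D = D + Lap V m w"
  by (rule ext) (simp add: fire_def Lap_def)

lemma LS_zero: "LS V m (\<lambda>_. 0) = 0"
  by (rule ext) (simp add: LS_def)

lemma LS_add: "LS V m (\<lambda>w. f w + g w) = LS V m f + LS V m g"
  by (rule ext) (simp add: LS_def algebra_simps sum.distrib)

lemma LS_diff: "LS V m (\<lambda>w. f w - g w) = LS V m f - LS V m g"
  by (rule ext) (simp add: LS_def algebra_simps sum_subtractf)

lemma LS_sm: "LS V m (\<lambda>w. k * f w) = sm k (LS V m f)"
  by (rule ext) (simp add: LS_def sm_def sum_distrib_left algebra_simps)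

lemma LS_delta: "finite V \<Longrightarrow> w \<in> V \<Longrightarrow> LS V m (\<lambda>w'. if w' = w then 1 else 0) = Lap V m w"
proof (rule ext)
  fix x assume "finite V" "w \<in> V"
  then show "LS V m (\<lambda>w'. if w' = w then 1 else 0) x = Lap V m w x"
    unfolding LS_def by (simp add: if_distrib[where f="\<lambda>c. c * _"] cong: if_cong)
qed

lemma lin_equiv_step:
  assumes "w \<in> V" shows "lin_equiv V m D (D + Lap V m w)"
proof -
  have "D + Lap V m w = fire V m w D" by (simp add: fire_Lap)
  then show ?thesis unfolding lin_equiv_def using assms by auto
qed

lemma lin_equiv_refl[simp]: "lin_equiv V m D D"
  by (simp add: lin_equiv_def)

lemma lin_equiv_sym: "lin_equiv V m D D' \<Longrightarrow> lin_equiv V m D' D"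
  unfolding lin_equiv_def by (rule equivclp_sym)

lemma lin_equiv_trans: "lin_equiv V m D D' \<Longrightarrow> lin_equiv V m D' D'' \<Longrightarrow> lin_equiv V m D D''"
  unfolding lin_equiv_def by (rule equivclp_trans)

lemma lin_equiv_nat_mult:
  assumes "w \<in> V" shows "lin_equiv V m D (D + sm (int k) (Lap V m w))"
proof (induction k)
  case 0 then show ?case by (simp add: sm_def)
next
  case (Suc k)
  have "D + sm (int (Suc k)) (Lap V m w) = (D + sm (int k) (Lap V m w)) + Lap V m w"
    by (rule ext) (simp add: sm_def algebra_simps)
  then show ?case using Suc lin_equiv_step[OF assms, where D="D + sm (int k) (Lap V m w)"]
    by (metis lin_equiv_trans)
qed

lemma lin_equiv_int_mult:
  assumes "w \<in> V" shows "lin_equiv V m D (D + sm k (Lap V m w))"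
proof (cases "k \<ge> 0")
  case True
  then show ?thesis using lin_equiv_nat_mult[OF assms, where D=D and k="nat k"] by simp
next
  case False
  let ?E = "D + sm k (Lap V m w)"
  have "lin_equiv V m ?E (?E + sm (int (nat (-k))) (Lap V m w))"
    by (rule lin_equiv_nat_mult[OF assms])
  moreover have "?E + sm (int (nat (-k))) (Lap V m w) = D"
    using False by (intro ext) (simp add: sm_def algebra_simps)
  ultimately show ?thesis by (metis lin_equiv_sym)
qed

lemma lin_equiv_LS_aux:
  assumes "finite A" "A \<subseteq> V"
  shows "lin_equiv V m D (D + (\<lambda>x. \<Sum>w\<in>A. f w * Lap V m w x))"
  using assms
proof (induction A arbitrary: D rule: finite_induct)
  case empty then show ?case by simp
next
  case (insert w A)
  have "lin_equiv V m D (D + sm (f w) (Lap V m w))"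
    using insert by (intro lin_equiv_int_mult) auto
  moreover have "lin_equiv V m (D + sm (f w) (Lap V m w))
      ((D + sm (f w) (Lap V m w)) + (\<lambda>x. \<Sum>w\<in>A. f w * Lap V m w x))"
    using insert.IH[where D="D + sm (f w) (Lap V m w)"] insert.prems by blast
  moreover have "(D + sm (f w) (Lap V m w)) + (\<lambda>x. \<Sum>w\<in>A. f w * Lap V m w x)
      = D + (\<lambda>x. \<Sum>w\<in>insert w A. f w * Lap V m w x)"
    using insert by (intro ext) (simp add: sm_def algebra_simps)
  ultimately show ?case by (metis lin_equiv_trans)
qed

lemma lin_equiv_iff:
  assumes "finite V"
  shows "lin_equiv V m D D' \<longleftrightarrow> (\<exists>f. D' = D + LS V m f)"
proof
  assume "lin_equiv V m D D'"
  then show "\<exists>f. D' = D + LS V m f"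
    unfolding lin_equiv_def
  proof (induction rule: equivclp_induct)
    case base
    then show ?case by (intro exI[of _ "\<lambda>_. 0"]) (simp add: LS_zero)
  next
    case (step y z)
    then obtain f where f: "y = D + LS V m f" by blast
    from step(2) show ?case
    proof
      assume "\<exists>w\<in>V. z = fire V m w y"
      then obtain w where w: "w \<in> V" "z = fire V m w y" by blast
      have "z = D + LS V m (\<lambda>w'. f w' + (if w' = w then 1 else 0))"
        using w f by (simp add: fire_Lap LS_add LS_delta assms add.assoc)
      then show ?case by blast
    next
      assume "\<exists>w\<in>V. y = fire V m w z"
      then obtain w where w: "w \<in> V" "y = fire V m w z" by blast
      have "z = D + LS V m (\<lambda>w'. f w' - (if w' = w then 1 else 0))"
        using w f by (simp add: fire_Lap LS_diff LS_delta assms algebra_simps)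
      then show ?case by blast
    qed
  qed
next
  assume "\<exists>f. D' = D + LS V m f"
  then obtain f where "D' = D + LS V m f" by blast
  then show "lin_equiv V m D D'"
    using lin_equiv_LS_aux[OF assms order_refl, where D=D and f=f] by (simp add: LS_def)
qed

lemma int_le_from_nat: "(\<And>k::nat. int k \<le> a \<Longrightarrow> int k \<le> b) \<Longrightarrow> b \<ge> -1 \<Longrightarrow> a \<le> (b::int)"
proof (cases "a < 0")
  case False
  assume "\<And>k::nat. int k \<le> a \<Longrightarrow> int k \<le> b"
  from this[of "nat a"] False show ?thesis by simp
qed simp

lemma int_le_from_nat2: "(\<And>k::nat. int (Suc k) \<le> b \<Longrightarrow> int k \<le> a) \<Longrightarrow> a \<ge> -1 \<Longrightarrow> b \<le> (a::int) + 1"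
proof (cases "b \<le> 0")
  case False
  assume h: "\<And>k::nat. int (Suc k) \<le> b \<Longrightarrow> int k \<le> a"
  have "int (Suc (nat (b - 1))) \<le> b" using False by simp
  from h[OF this] False show ?thesis by simp
qed simp

lemma chip_nonneg: "chip x y \<ge> 0" by (simp add: chip_def)

locale graph =
  fixes V :: "'v set" and m :: "'v \<Rightarrow> 'v \<Rightarrow> nat"
  assumes fin: "finite V" and ne: "V \<noteq> {}"
    and msym: "m x y = m y x" and mdiag: "m x x = 0" and mout: "x \<notin> V \<Longrightarrow> m x y = 0"
begin

abbreviation le (infix "\<approx>" 50) where "A \<approx> B \<equiv> lin_equiv V m A B"

lemma le_iff: "A \<approx> B \<longleftrightarrow> (\<exists>f. B = A + LS V m f)"
  by (rule lin_equiv_iff[OF fin])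

lemma le_plus: "A \<approx> B \<Longrightarrow> C \<approx> D \<Longrightarrow> A + C \<approx> B + D"
proof -
  assume "A \<approx> B" "C \<approx> D"
  then obtain f g where "B = A + LS V m f" "D = C + LS V m g" by (auto simp: le_iff)
  then have "B + D = (A + C) + LS V m (\<lambda>w. f w + g w)" by (simp add: LS_add algebra_simps)
  then show ?thesis by (auto simp: le_iff)
qed

lemma le_minus: "A \<approx> B \<Longrightarrow> C \<approx> D \<Longrightarrow> A - C \<approx> B - D"
proof -
  assume "A \<approx> B" "C \<approx> D"
  then obtain f g where "B = A + LS V m f" "D = C + LS V m g" by (auto simp: le_iff)
  then have "B - D = (A - C) + LS V m (\<lambda>w. f w - g w)" by (simp add: LS_diff algebra_simps)
  then show ?thesis by (auto simp: le_iff)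
qed

lemma le_sm: "A \<approx> B \<Longrightarrow> sm k A \<approx> sm k B"
proof -
  assume "A \<approx> B"
  then obtain f where "B = A + LS V m f" by (auto simp: le_iff)
  then have "sm k B = sm k A + LS V m (\<lambda>w. k * f w)"
    by (simp add: LS_sm) (simp add: sm_def fun_eq_iff algebra_simps)
  then show ?thesis by (auto simp: le_iff)
qed

lemma le_refl[simp]: "A \<approx> A" by simp
lemma le_sym: "A \<approx> B \<Longrightarrow> B \<approx> A" by (rule lin_equiv_sym)
lemma le_trans: "A \<approx> B \<Longrightarrow> B \<approx> C \<Longrightarrow> A \<approx> C" by (rule lin_equiv_trans)

lemma le_shift: "A \<approx> B \<longleftrightarrow> A - B \<approx> 0"
proof
  assume "A \<approx> B" then show "A - B \<approx> 0" using le_minus[of A B B B] by simp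
next
  assume "A - B \<approx> 0" then show "A \<approx> B" using le_plus[of "A - B" 0 B B] by simp
qed

lemma deg_add[simp]: "deg V (A + B) = deg V A + deg V B"
  by (simp add: deg_def sum.distrib)
lemma deg_diff[simp]: "deg V (A - B) = deg V A - deg V B"
  by (simp add: deg_def sum_subtractf)
lemma deg_sm[simp]: "deg V (sm k A) = k * deg V A"
  by (simp add: deg_def sm_def sum_distrib_left)
lemma deg_zero[simp]: "deg V 0 = 0"
  by (simp add: deg_def)
lemma deg_chip[simp]: "x \<in> V \<Longrightarrow> deg V (chip x) = 1"
  using fin by (simp add: deg_def chip_def)

lemma val_alt: "val V m w = (\<Sum>x\<in>V. m x w)"
  by (simp add: val_def msym)

lemma deg_Lap: "w \<in> V \<Longrightarrow> deg V (Lap V m w) = 0"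
proof -
  assume w: "w \<in> V"
  have "deg V (Lap V m w) = Lap V m w w + (\<Sum>x\<in>V-{w}. Lap V m w x)"
    unfolding deg_def using w fin by (simp add: sum.remove)
  also have "(\<Sum>x\<in>V-{w}. Lap V m w x) = (\<Sum>x\<in>V-{w}. int (m x w))"
    by (rule sum.cong) (auto simp: Lap_def)
  also have "\<dots> = (\<Sum>x\<in>V. int (m x w))"
    using w fin by (simp add: sum.remove mdiag)
  also have "Lap V m w w = - (\<Sum>x\<in>V. int (m x w))"
    by (simp add: Lap_def val_alt)
  finally show ?thesis by simp
qed

lemma deg_LS: "deg V (LS V m f) = 0"
proof -
  have "deg V (LS V m f) = (\<Sum>w\<in>V. f w * deg V (Lap V m w))"
    unfolding deg_def LS_def by (subst sum.swap) (simp add: sum_distrib_left)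
  also have "\<dots> = 0" by (simp add: deg_Lap)
  finally show ?thesis .
qed

lemma le_deg: "A \<approx> B \<Longrightarrow> deg V A = deg V B"
  by (auto simp: le_iff deg_LS)

lemma is_div_LS: "is_div V (LS V m f)"
  unfolding is_div_def LS_def Lap_def
proof (intro allI impI)
  fix x assume "x \<notin> V"
  then show "(\<Sum>w\<in>V. f w * (if x = w then - int (val V m w) else int (m x w))) = 0"
    by (intro sum.neutral) (auto simp: mout)
qed

lemma is_div_add[simp]: "is_div V A \<Longrightarrow> is_div V B \<Longrightarrow> is_div V (A + B)"
  by (simp add: is_div_def)
lemma is_div_diff[simp]: "is_div V A \<Longrightarrow> is_div V B \<Longrightarrow> is_div V (A - B)"
  by (simp add: is_div_def)
lemma is_div_sm[simp]: "is_div V A \<Longrightarrow> is_div V (sm k A)"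
  by (simp add: is_div_def sm_def)
lemma is_div_chip[simp]: "x \<in> V \<Longrightarrow> is_div V (chip x)"
  by (simp add: is_div_def chip_def)
lemma is_div_zero[simp]: "is_div V 0"
  by (simp add: is_div_def)

lemma le_is_div: "A \<approx> B \<Longrightarrow> is_div V A \<Longrightarrow> is_div V B"
  by (auto simp: le_iff is_div_LS)

lemma eff_add[simp]: "effective A \<Longrightarrow> effective B \<Longrightarrow> effective (A + B)"
  by (simp add: effective_def)
lemma eff_chip[simp]: "effective (chip x)"
  by (simp add: effective_def chip_def)
lemma eff_zero[simp]: "effective 0"
  by (simp add: effective_def)
lemma eff_sm[simp]: "k \<ge> 0 \<Longrightarrow> effective A \<Longrightarrow> effective (sm k A)"
  by (simp add: effective_def sm_def)

lemma eff_deg_nonneg: "effective E \<Longrightarrow> deg V E \<ge> 0"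
  unfolding deg_def effective_def by (simp add: sum_nonneg)

lemma eff_deg0: "is_div V E \<Longrightarrow> effective E \<Longrightarrow> deg V E = 0 \<Longrightarrow> E = 0"
proof (rule ext)
  fix x assume d: "is_div V E" and e: "effective E" and g: "deg V E = 0"
  show "E x = 0 x"
  proof (cases "x \<in> V")
    case True
    have "\<forall>y\<in>V. E y = 0"
      using g e fin unfolding deg_def effective_def by (subst sum_nonneg_eq_0_iff[symmetric]) auto
    then show ?thesis using True by simp
  next
    case False then show ?thesis using d by (simp add: is_div_def)
  qed
qed

lemma eff_deg1: assumes "is_div V E" "effective E" "deg V E = 1" shows "\<exists>y\<in>V. E = chip y"
proof -
  have "\<exists>y\<in>V. E y \<ge> 1"
  proof (rule ccontr)
    assume nex: "\<not> (\<exists>y\<in>V. E y \<ge> 1)"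
    have "E y = 0" if "y \<in> V" for y
    proof -
      have "E y \<ge> 0" using assms(2) by (simp add: effective_def)
      moreover have "\<not> E y \<ge> 1" using nex that by blast
      ultimately show ?thesis by linarith
    qed
    then have "\<forall>y\<in>V. E y = 0" by blast
    then have "deg V E = 0" by (simp add: deg_def)
    then show False using assms by simp
  qed
  then obtain y where y: "y \<in> V" "E y \<ge> 1" by blast
  have "is_div V (E - chip y)" using assms y by simp
  moreover have "effective (E - chip y)" using assms y by (auto simp: effective_def chip_def)
  moreover have "deg V (E - chip y) = 0" using assms y by simp
  ultimately have "E - chip y = 0" by (rule eff_deg0)
  then show ?thesis using y by (intro bexI[of _ y]) (simp add: algebra_simps)
qed

lemma equiv_eff_cong: "A \<approx> B \<Longrightarrow> equiv_eff V m A \<longleftrightarrow> equiv_eff V m B"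
  unfolding equiv_eff_def by (meson le_sym le_trans)

lemma equiv_eff_neg: "deg V A < 0 \<Longrightarrow> \<not> equiv_eff V m A"
  unfolding equiv_eff_def using le_deg eff_deg_nonneg by fastforce

lemma equiv_eff_add: "equiv_eff V m A \<Longrightarrow> is_div V G \<Longrightarrow> effective G \<Longrightarrow> equiv_eff V m (A + G)"
proof -
  assume "equiv_eff V m A" "is_div V G" "effective G"
  then obtain F where F: "is_div V F" "effective F" "A \<approx> F" unfolding equiv_eff_def by blast
  have "A + G \<approx> F + G" using le_plus[OF F(3) le_refl] .
  then show ?thesis unfolding equiv_eff_def using F \<open>is_div V G\<close> \<open>effective G\<close> by (intro exI[of _ "F + G"]) simp
qed

lemma equiv_eff_I: "A \<approx> F \<Longrightarrow> is_div V F \<Longrightarrow> effective F \<Longrightarrow> equiv_eff V m A"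
  unfolding equiv_eff_def by blast

definition P :: "('v \<Rightarrow> int) \<Rightarrow> nat \<Rightarrow> bool" where
  "P D r \<longleftrightarrow> (\<forall>E. is_div V E \<and> effective E \<and> deg V E = int r \<longrightarrow> equiv_eff V m (D - E))"

lemma P0: "P D 0 \<longleftrightarrow> equiv_eff V m D"
proof
  assume "P D 0"
  then have "is_div V (0::'v\<Rightarrow>int) \<and> effective (0::'v\<Rightarrow>int) \<and> deg V (0::'v\<Rightarrow>int) = int 0 \<longrightarrow> equiv_eff V m (D - 0)"
    unfolding P_def by (rule spec)
  then show "equiv_eff V m D" by simp
next
  assume a: "equiv_eff V m D"
  show "P D 0" unfolding P_def
  proof (intro allI impI)
    fix E assume "is_div V E \<and> effective E \<and> deg V E = int 0"
    then have "E = 0" using eff_deg0 by simp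
    then show "equiv_eff V m (D - E)" using a by simp
  qed
qed

lemma P_mono: "P D k \<Longrightarrow> j \<le> k \<Longrightarrow> P D j"
proof -
  assume Pk: "P D k" and jk: "j \<le> k"
  obtain x0 where x0: "x0 \<in> V" using ne by blast
  show "P D j" unfolding P_def
  proof (intro allI impI)
    fix E assume E: "is_div V E \<and> effective E \<and> deg V E = int j"
    let ?E' = "E + sm (int (k - j)) (chip x0)"
    from Pk have "is_div V ?E' \<and> effective ?E' \<and> deg V ?E' = int k \<longrightarrow> equiv_eff V m (D - ?E')"
      unfolding P_def by (rule spec)
    moreover have "is_div V ?E'" using E x0 by simp
    moreover have "effective ?E'" using E by simp
    moreover have "deg V ?E' = int k" using E x0 jk by (simp add: of_nat_diff)
    ultimately have "equiv_eff V m (D - ?E')" by blast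
    then have "equiv_eff V m ((D - ?E') + sm (int (k - j)) (chip x0))"
      using x0 by (intro equiv_eff_add) auto
    then show "equiv_eff V m (D - E)" by (simp add: algebra_simps)
  qed
qed

lemma P_bound: "P D k \<Longrightarrow> int k \<le> deg V D"
proof -
  assume Pk: "P D k"
  obtain x0 where x0: "x0 \<in> V" using ne by blast
  from Pk have "is_div V (sm (int k) (chip x0)) \<and> effective (sm (int k) (chip x0)) \<and> deg V (sm (int k) (chip x0)) = int k
     \<longrightarrow> equiv_eff V m (D - sm (int k) (chip x0))" unfolding P_def by (rule spec)
  then have "equiv_eff V m (D - sm (int k) (chip x0))" using x0 by simp
  then have "\<not> deg V (D - sm (int k) (chip x0)) < 0" using equiv_eff_neg by blast
  then show ?thesis using x0 by simp
qed

lemma rank_notee0: "\<not> equiv_eff V m D \<Longrightarrow> rank V m D = -1"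
  by (simp add: rank_def)

lemma rank_ge: "int k \<le> rank V m D \<longleftrightarrow> P D k"
proof (cases "equiv_eff V m D")
  case False
  then have "\<not> P D k" using P_mono[of D k 0] P0 by auto
  then show ?thesis using False by (simp add: rank_notee0)
next
  case True
  have ex: "P D 0" using True P0 by simp
  have bd: "\<forall>y. P D y \<longrightarrow> y \<le> nat (deg V D)"
  proof (intro allI impI)
    fix y assume "P D y"
    then have "int y \<le> deg V D" by (rule P_bound)
    then show "y \<le> nat (deg V D)" by simp
  qed
  have eq: "rank V m D = int (GREATEST r. P D r)"
    using True unfolding rank_def P_def by simp
  show ?thesis
  proof
    assume "int k \<le> rank V m D"
    then have "k \<le> (GREATEST r. P D r)" using eq by simp
    moreover have "P D (GREATEST r. P D r)" by (rule GreatestI_nat[where P="P D", OF ex]) (use bd in blast)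
    ultimately show "P D k" using P_mono by blast
  next
    assume "P D k"
    then have "k \<le> (GREATEST r. P D r)" by (rule Greatest_le_nat) (use bd in blast)
    then show "int k \<le> rank V m D" using eq by simp
  qed
qed

lemma rank_notee: "\<not> equiv_eff V m D \<Longrightarrow> rank V m D = -1"
  by (simp add: rank_def)

lemma rank_ge_m1: "rank V m D \<ge> -1"
proof (cases "equiv_eff V m D")
  case True
  then have "int 0 \<le> rank V m D" using rank_ge P0 by blast
  then show ?thesis by simp
next
  case False then show ?thesis by (simp add: rank_notee)
qed

lemma rank_m1: "rank V m D = -1 \<longleftrightarrow> \<not> equiv_eff V m D"
proof
  assume "rank V m D = -1"
  then have "\<not> int 0 \<le> rank V m D" by simp
  then show "\<not> equiv_eff V m D" using rank_ge P0 by blast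
qed (rule rank_notee)

lemma rank_ge0: "0 \<le> rank V m D \<longleftrightarrow> equiv_eff V m D"
  using rank_ge[of 0 D] P0 by simp

lemma rank_eq: "rank V m D = int k \<longleftrightarrow> P D k \<and> \<not> P D (Suc k)"
  using rank_ge[of k D] rank_ge[of "Suc k" D] by auto

lemma P_cong: "A \<approx> B \<Longrightarrow> P A k \<longleftrightarrow> P B k"
proof -
  assume ab: "A \<approx> B"
  have "equiv_eff V m (A - E) \<longleftrightarrow> equiv_eff V m (B - E)" for E
    by (rule equiv_eff_cong) (rule le_minus[OF ab le_refl])
  then show ?thesis unfolding P_def by simp
qed

lemma rank_cong: "A \<approx> B \<Longrightarrow> rank V m A = rank V m B"
proof -
  assume ab: "A \<approx> B"
  have "int k \<le> rank V m A \<longleftrightarrow> int k \<le> rank V m B" for k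
    using rank_ge P_cong[OF ab] by simp
  moreover have "rank V m A \<ge> -1" "rank V m B \<ge> -1" by (rule rank_ge_m1)+
  ultimately show ?thesis
    by (meson int_le_from_nat order.antisym)
qed

lemma rank_add_chip1: "x \<in> V \<Longrightarrow> rank V m D \<le> rank V m (D + chip x)"
proof -
  assume x: "x \<in> V"
  have "P D k \<Longrightarrow> P (D + chip x) k" for k
    unfolding P_def
  proof (intro allI impI)
    fix E assume h: "\<forall>E. is_div V E \<and> effective E \<and> deg V E = int k \<longrightarrow> equiv_eff V m (D - E)"
      "is_div V E \<and> effective E \<and> deg V E = int k"
    from h(1) have "is_div V E \<and> effective E \<and> deg V E = int k \<longrightarrow> equiv_eff V m (D - E)" by (rule spec)
    then have "equiv_eff V m (D - E)" using h(2) by blast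
    then have "equiv_eff V m (D - E + chip x)" using x by (intro equiv_eff_add) simp_all
    then show "equiv_eff V m (D + chip x - E)" by (simp add: algebra_simps)
  qed
  then have "int k \<le> rank V m D \<Longrightarrow> int k \<le> rank V m (D + chip x)" for k
    unfolding rank_ge .
  then show ?thesis using rank_ge_m1[of "D + chip x"]
    by (rule int_le_from_nat)
qed

lemma rank_add_chip2: "x \<in> V \<Longrightarrow> rank V m (D + chip x) \<le> rank V m D + 1"
proof -
  assume x: "x \<in> V"
  have "P (D + chip x) (Suc k) \<Longrightarrow> P D k" for k
    unfolding P_def
  proof (intro allI impI)
    fix E assume h: "\<forall>E. is_div V E \<and> effective E \<and> deg V E = int (Suc k) \<longrightarrow> equiv_eff V m (D + chip x - E)"
      "is_div V E \<and> effective E \<and> deg V E = int k"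
    from h(1) have "is_div V (E + chip x) \<and> effective (E + chip x) \<and> deg V (E + chip x) = int (Suc k)
       \<longrightarrow> equiv_eff V m (D + chip x - (E + chip x))" by (rule spec)
    then have "equiv_eff V m (D + chip x - (E + chip x))" using x h(2) by simp
    then show "equiv_eff V m (D - E)" by (simp add: algebra_simps)
  qed
  then have "int (Suc k) \<le> rank V m (D + chip x) \<Longrightarrow> int k \<le> rank V m D" for k
    unfolding rank_ge .
  then show ?thesis using rank_ge_m1[of D]
    by (rule int_le_from_nat2)
qed

end


declare lin_equiv_trans[trans]

lemma sum_chip: "finite S \<Longrightarrow> (\<Sum>z\<in>S. chip x z) = (if x \<in> S then 1 else 0)"
  by (simp add: chip_def)

locale theta =
  fixes n0 n1 n2 :: nat
  assumes n0: "n0 \<ge> 1" and n1: "n1 \<ge> 1" and n2: "n2 \<ge> 1"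
begin

abbreviation "len \<equiv> th_len n0 n1 n2"
abbreviation "vtx \<equiv> th_vtx n0 n1 n2"
abbreviation "VV \<equiv> th_V n0 n1 n2"
abbreviation "mm \<equiv> th_mult n0 n1 n2"
definition "p = ((0::nat), (0::nat))"
definition "q = ((0::nat), n0)"

lemma len_pos: "len \<alpha> \<ge> 1"
  using n0 n1 n2 by (simp add: th_len_def)

lemma len0: "len 0 = n0" by (simp add: th_len_def)

lemma vtx_0[simp]: "vtx \<alpha> 0 = p"
  by (simp add: th_vtx_def p_def)

lemma vtx_len[simp]: "vtx \<alpha> (len \<alpha>) = q"
  using len_pos[of \<alpha>] by (simp add: th_vtx_def q_def)

lemma vtx_int: "0 < i \<Longrightarrow> i < len \<alpha> \<Longrightarrow> vtx \<alpha> i = (\<alpha>, i)"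
  by (simp add: th_vtx_def)

lemma p_ne_q[simp]: "p \<noteq> q" "q \<noteq> p"
  using n0 by (auto simp: p_def q_def)

lemma vtx_eq_p: "i \<le> len \<alpha> \<Longrightarrow> vtx \<alpha> i = p \<longleftrightarrow> i = 0"
  using n0 by (auto simp: th_vtx_def p_def q_def)

lemma vtx_eq_q: "i \<le> len \<alpha> \<Longrightarrow> vtx \<alpha> i = q \<longleftrightarrow> i = len \<alpha>"
  using n0 len0 len_pos[of \<alpha>] by (auto simp: th_vtx_def p_def q_def)

lemma vtx_eq_int:
  assumes "i \<le> len \<alpha>" "0 < j" "j < len \<beta>"
  shows "vtx \<alpha> i = vtx \<beta> j \<longleftrightarrow> \<alpha> = \<beta> \<and> i = j"
  using assms len0 by (auto simp: th_vtx_def)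

lemma vtx_inj: "i \<le> len \<alpha> \<Longrightarrow> j \<le> len \<alpha> \<Longrightarrow> vtx \<alpha> i = vtx \<alpha> j \<longleftrightarrow> i = j"
proof -
  assume a: "i \<le> len \<alpha>" "j \<le> len \<alpha>"
  show ?thesis
  proof (cases "0 < j \<and> j < len \<alpha>")
    case True then show ?thesis using vtx_eq_int[OF a(1)] by auto
  next
    case False
    then have "j = 0 \<or> j = len \<alpha>" using a by auto
    then show ?thesis using vtx_eq_p[OF a(1)] vtx_eq_q[OF a(1)] by auto
  qed
qed

lemma vtx_in: "\<alpha> < 3 \<Longrightarrow> i \<le> len \<alpha> \<Longrightarrow> vtx \<alpha> i \<in> VV"
  by (auto simp: th_V_def)

lemma V_cases: "x \<in> VV \<Longrightarrow> \<exists>\<alpha> i. \<alpha> < 3 \<and> i \<le> len \<alpha> \<and> x = vtx \<alpha> i"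
  by (auto simp: th_V_def)

lemma p_in[simp]: "p \<in> VV" using vtx_in[of 0 0] by simp
lemma q_in[simp]: "q \<in> VV" using vtx_in[of 0 "len 0"] by simp

lemma V_image: "VV = (\<lambda>(\<alpha>,i). vtx \<alpha> i) ` (SIGMA \<alpha>:{..<3}. {..len \<alpha>})"
proof
  show "VV \<subseteq> (\<lambda>(\<alpha>,i). vtx \<alpha> i) ` (SIGMA \<alpha>:{..<3}. {..len \<alpha>})"
  proof
    fix x assume "x \<in> VV"
    then obtain \<alpha> i where "\<alpha> < 3" "i \<le> len \<alpha>" "x = vtx \<alpha> i" using V_cases by blast
    then show "x \<in> (\<lambda>(\<alpha>,i). vtx \<alpha> i) ` (SIGMA \<alpha>:{..<3}. {..len \<alpha>})"
      by (intro image_eqI[of _ _ "(\<alpha>, i)"]) auto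
  qed
  show "(\<lambda>(\<alpha>,i). vtx \<alpha> i) ` (SIGMA \<alpha>:{..<3}. {..len \<alpha>}) \<subseteq> VV"
    using vtx_in by auto
qed

lemma finV: "finite VV"
  unfolding V_image by (intro finite_imageI finite_SigmaI) auto

lemma mm_sum: "int (mm x y) = (\<Sum>\<alpha><3. \<Sum>i<len \<alpha>. of_bool ({x,y} = {vtx \<alpha> i, vtx \<alpha> (Suc i)}))"
proof -
  have e: "{(\<alpha>, i). \<alpha> < 3 \<and> i < len \<alpha> \<and> {x, y} = {vtx \<alpha> i, vtx \<alpha> (Suc i)}}
      = (SIGMA \<alpha>:{..<3}. {..<len \<alpha>} \<inter> {i. {x, y} = {vtx \<alpha> i, vtx \<alpha> (Suc i)}})" by auto
  have "mm x y = (\<Sum>\<alpha><3. card ({..<len \<alpha>} \<inter> {i. {x, y} = {vtx \<alpha> i, vtx \<alpha> (Suc i)}}))"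
    unfolding th_mult_def e by (rule card_SigmaI) auto
  then show ?thesis by (simp add: of_nat_sum)
qed

lemma edge_ne: "i < len \<alpha> \<Longrightarrow> vtx \<alpha> i \<noteq> vtx \<alpha> (Suc i)"
  using vtx_inj[of i \<alpha> "Suc i"] by simp

lemma mm_sym: "mm x y = mm y x"
  unfolding th_mult_def by (simp add: insert_commute)

lemma mm_diag: "mm x x = 0"
proof -
  have "int (mm x x) = 0"
    unfolding mm_sum
    by (intro sum.neutral ballI) (use edge_ne in \<open>auto simp: doubleton_eq_iff dest: sym\<close>)
  then show ?thesis by simp
qed

lemma mm_out: "x \<notin> VV \<Longrightarrow> mm x y = 0"
proof -
  assume x: "x \<notin> VV"
  have "of_bool ({x,y} = {vtx \<alpha> i, vtx \<alpha> (Suc i)}) = (0::int)"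
    if "\<alpha> < 3" "i < len \<alpha>" for \<alpha> i
  proof -
    have "vtx \<alpha> i \<in> VV" "vtx \<alpha> (Suc i) \<in> VV" using that vtx_in by auto
    then have "{x,y} \<noteq> {vtx \<alpha> i, vtx \<alpha> (Suc i)}" using x by (auto simp: doubleton_eq_iff)
    then show ?thesis by simp
  qed
  then have "int (mm x y) = 0" unfolding mm_sum by simp
  then show ?thesis by simp
qed

end

sublocale theta \<subseteq> graph "th_V n0 n1 n2" "th_mult n0 n1 n2"
proof
  show "finite VV" by (rule finV)
  show "VV \<noteq> {}" using p_in by blast
  show "mm x y = mm y x" for x y by (rule mm_sym)
  show "mm x x = 0" for x by (rule mm_diag)
  show "x \<notin> VV \<Longrightarrow> mm x y = 0" for x y by (rule mm_out)
qed


context theta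
begin

abbreviation leq (infix "\<approx>" 50) where "A \<approx> B \<equiv> lin_equiv VV mm A B"

lemma div_eq_off: "is_div VV A \<Longrightarrow> is_div VV B \<Longrightarrow> deg VV A = deg VV B \<Longrightarrow> w \<in> VV
   \<Longrightarrow> (\<And>x. x \<in> VV \<Longrightarrow> x \<noteq> w \<Longrightarrow> A x = B x) \<Longrightarrow> A = B"
proof (rule ext)
  fix x assume dA: "is_div VV A" and dB: "is_div VV B" and dg: "deg VV A = deg VV B" and w: "w \<in> VV"
    and off: "\<And>x. x \<in> VV \<Longrightarrow> x \<noteq> w \<Longrightarrow> A x = B x"
  have sA: "deg VV A = A w + (\<Sum>y\<in>VV-{w}. A y)" unfolding deg_def using w finV by (simp add: sum.remove)
  have sB: "deg VV B = B w + (\<Sum>y\<in>VV-{w}. B y)" unfolding deg_def using w finV by (simp add: sum.remove)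
  have "(\<Sum>y\<in>VV-{w}. A y) = (\<Sum>y\<in>VV-{w}. B y)" by (rule sum.cong) (auto intro: off)
  then have Aw: "A w = B w" using sA sB dg by simp
  show "A x = B x"
  proof (cases "x \<in> VV")
    case True then show ?thesis using Aw off by (cases "x = w") auto
  next
    case False
    have "A x = 0" "B x = 0" using dA dB False unfolding is_div_def by blast+
    then show ?thesis by simp
  qed
qed

lemma is_div_Lap: "w \<in> VV \<Longrightarrow> is_div VV (Lap VV mm w)"
  unfolding is_div_def Lap_def using mout by auto

lemma doubleton_edge: "{x,w} = {a,b} \<longleftrightarrow> (x = a \<and> w = b) \<or> (x = b \<and> w = a)"
  by (rule doubleton_eq_iff)

lemma mm_p: assumes "x \<noteq> p" shows "int (mm x p) = (\<Sum>\<alpha><3. chip (vtx \<alpha> 1) x)"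
proof -
  have "of_bool ({x,p} = {vtx \<alpha> i, vtx \<alpha> (Suc i)}) = (of_bool (i = 0 \<and> x = vtx \<alpha> 1) :: int)"
    if "i < len \<alpha>" for \<alpha> i
  proof -
    have ne: "vtx \<alpha> (Suc i) \<noteq> p" using vtx_eq_p[of "Suc i" \<alpha>] that by simp
    have "{x,p} = {vtx \<alpha> i, vtx \<alpha> (Suc i)} \<longleftrightarrow> (vtx \<alpha> i = p \<and> x = vtx \<alpha> (Suc i))"
      using ne assms unfolding doubleton_eq_iff by auto
    also have "\<dots> \<longleftrightarrow> i = 0 \<and> x = vtx \<alpha> 1" using vtx_eq_p[of i \<alpha>] that by auto
    finally show ?thesis by simp
  qed
  then have "int (mm x p) = (\<Sum>\<alpha><3. \<Sum>i<len \<alpha>. (of_bool (i = 0 \<and> x = vtx \<alpha> 1) :: int))"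
    unfolding mm_sum by (intro sum.cong refl) auto
  also have "\<dots> = (\<Sum>\<alpha><3. chip (vtx \<alpha> 1) x)"
  proof (rule sum.cong[OF refl])
    fix \<alpha> :: nat
    have "(\<Sum>i<len \<alpha>. (of_bool (i = 0 \<and> x = vtx \<alpha> 1) :: int)) = (\<Sum>i<len \<alpha>. if i = 0 then of_bool (x = vtx \<alpha> 1) else 0)"
      by (intro sum.cong) auto
    also have "\<dots> = of_bool (x = vtx \<alpha> 1)" using len_pos[of \<alpha>] by (simp add: sum.delta)
    finally show "(\<Sum>i<len \<alpha>. (of_bool (i = 0 \<and> x = vtx \<alpha> 1) :: int)) = chip (vtx \<alpha> 1) x"
      by (simp add: chip_def)
  qed
  finally show ?thesis .
qed

lemma sum3: "(\<Sum>\<alpha><3. f \<alpha>) = f 0 + f 1 + (f (2::nat) :: 'a :: comm_monoid_add)"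
  by (simp add: numeral_3_eq_3 numeral_2_eq_2 lessThan_Suc add_ac)

definition "L3 = chip (vtx 0 1) + chip (vtx 1 1) + chip (vtx 2 1) - sm 3 (chip p)"

lemma vtx1_in: "\<alpha> < 3 \<Longrightarrow> vtx \<alpha> 1 \<in> VV" using vtx_in len_pos by auto
lemma vtx1_ne_p: "vtx \<alpha> 1 \<noteq> p" using vtx_eq_p[of 1 \<alpha>] len_pos[of \<alpha>] by auto

lemma Lap_p: "Lap VV mm p = L3"
proof (rule div_eq_off[OF is_div_Lap[OF p_in] _ _ p_in])
  show "is_div VV L3" unfolding L3_def using vtx1_in by simp
  show "deg VV (Lap VV mm p) = deg VV L3"
    unfolding L3_def using deg_Lap[OF p_in] vtx1_in by simp
  fix x assume "x \<in> VV" "x \<noteq> p"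
  then show "Lap VV mm p x = L3 x"
    unfolding Lap_def L3_def using mm_p[of x] by (simp add: sum3 sm_def chip_def)
qed

lemma mm_int: assumes a0: "\<alpha>0 < 3" and i0: "0 < i0" "i0 < len \<alpha>0" and xw: "x \<noteq> vtx \<alpha>0 i0"
  shows "int (mm x (vtx \<alpha>0 i0)) = chip (vtx \<alpha>0 (i0 - 1)) x + chip (vtx \<alpha>0 (Suc i0)) x"
proof -
  let ?w = "vtx \<alpha>0 i0"
  have eqw: "vtx \<alpha> j = ?w \<longleftrightarrow> \<alpha> = \<alpha>0 \<and> j = i0" if "j \<le> len \<alpha>" for \<alpha> j
    using vtx_eq_int[OF that i0] by auto
  have "of_bool ({x,?w} = {vtx \<alpha> i, vtx \<alpha> (Suc i)}) =
     (if \<alpha> = \<alpha>0 then (of_bool (i = i0 - 1 \<and> x = vtx \<alpha>0 (i0 - 1)) + of_bool (i = i0 \<and> x = vtx \<alpha>0 (Suc i0)) :: int) else 0)"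
    if "i < len \<alpha>" for \<alpha> i
  proof -
    have eA: "vtx \<alpha> i = ?w \<longleftrightarrow> \<alpha> = \<alpha>0 \<and> i = i0" using eqw[of i \<alpha>] that by simp
    have eB: "vtx \<alpha> (Suc i) = ?w \<longleftrightarrow> \<alpha> = \<alpha>0 \<and> Suc i = i0" using eqw[of "Suc i" \<alpha>] that by simp
    have dd: "{x,?w} = {vtx \<alpha> i, vtx \<alpha> (Suc i)} \<longleftrightarrow> (x = vtx \<alpha> i \<and> ?w = vtx \<alpha> (Suc i)) \<or> (x = vtx \<alpha> (Suc i) \<and> ?w = vtx \<alpha> i)"
      by (rule doubleton_eq_iff)
    show ?thesis
    proof (cases "\<alpha> = \<alpha>0")
      case False
      then have "\<not> {x,?w} = {vtx \<alpha> i, vtx \<alpha> (Suc i)}" using dd eA eB by metis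
      then show ?thesis using False by simp
    next
      case True
      show ?thesis
      proof (cases "i = i0")
        case T2: True
        then have "{x,?w} = {vtx \<alpha> i, vtx \<alpha> (Suc i)} \<longleftrightarrow> x = vtx \<alpha>0 (Suc i0)"
          using dd eA eB True by auto
        moreover have "i0 \<noteq> i0 - 1" using i0 by arith
        ultimately show ?thesis using True T2 i0 by simp
      next
        case F2: False
        show ?thesis
        proof (cases "Suc i = i0")
          case T3: True
          then have "{x,?w} = {vtx \<alpha> i, vtx \<alpha> (Suc i)} \<longleftrightarrow> x = vtx \<alpha>0 (i0 - 1)"
            using dd eA eB True F2 by auto
          then show ?thesis using True T3 F2 by simp
        next
          case F3: False
          then have "\<not> {x,?w} = {vtx \<alpha> i, vtx \<alpha> (Suc i)}" using dd eA eB F2 by metis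
          moreover have "i \<noteq> i0 - 1" using F3 i0 by arith
          ultimately show ?thesis using True F2 by simp
        qed
      qed
    qed
  qed
  then have "int (mm x ?w) = (\<Sum>\<alpha><3. \<Sum>i<len \<alpha>. (if \<alpha> = \<alpha>0 then (of_bool (i = i0 - 1 \<and> x = vtx \<alpha>0 (i0 - 1)) + of_bool (i = i0 \<and> x = vtx \<alpha>0 (Suc i0)) :: int) else 0))"
    unfolding mm_sum by (intro sum.cong refl) auto
  also have "\<dots> = (\<Sum>\<alpha><3. if \<alpha> = \<alpha>0 then (\<Sum>i<len \<alpha>0. (of_bool (i = i0 - 1 \<and> x = vtx \<alpha>0 (i0 - 1)) + of_bool (i = i0 \<and> x = vtx \<alpha>0 (Suc i0)) :: int)) else 0)"
    by (intro sum.cong refl) auto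
  also have "\<dots> = (\<Sum>i<len \<alpha>0. (of_bool (i = i0 - 1 \<and> x = vtx \<alpha>0 (i0 - 1)) + of_bool (i = i0 \<and> x = vtx \<alpha>0 (Suc i0)) :: int))"
    using a0 by (simp add: sum.delta)
  also have "\<dots> = (\<Sum>i<len \<alpha>0. (if i = i0 - 1 then of_bool (x = vtx \<alpha>0 (i0 - 1)) else 0) + (if i = i0 then of_bool (x = vtx \<alpha>0 (Suc i0)) else (0::int)))"
    by (intro sum.cong refl) auto
  also have "\<dots> = of_bool (x = vtx \<alpha>0 (i0 - 1)) + of_bool (x = vtx \<alpha>0 (Suc i0))"
  proof -
    have "i0 - 1 < len \<alpha>0" using i0 by arith
    then show ?thesis using i0 by (simp add: sum.distrib sum.delta)
  qed
  finally show ?thesis by (simp add: chip_def)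
qed

definition "L2 \<alpha> i = chip (vtx \<alpha> (i - 1)) + chip (vtx \<alpha> (Suc i)) - sm 2 (chip (vtx \<alpha> i))"

lemma Lap_int: assumes "\<alpha> < 3" "0 < i" "i < len \<alpha>" shows "Lap VV mm (vtx \<alpha> i) = L2 \<alpha> i"
proof -
  have w: "vtx \<alpha> i \<in> VV" using assms vtx_in by auto
  show ?thesis
proof (rule div_eq_off[OF is_div_Lap[OF w] _ _ w])
  have ins: "vtx \<alpha> (i - 1) \<in> VV" "vtx \<alpha> (Suc i) \<in> VV" using assms vtx_in by auto
  show "is_div VV (L2 \<alpha> i)" unfolding L2_def using ins w by simp
  show "deg VV (Lap VV mm (vtx \<alpha> i)) = deg VV (L2 \<alpha> i)"
    unfolding L2_def using deg_Lap[OF w] ins w by simp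
  fix x assume "x \<in> VV" "x \<noteq> vtx \<alpha> i"
  then show "Lap VV mm (vtx \<alpha> i) x = L2 \<alpha> i x"
    unfolding Lap_def L2_def using mm_int[OF assms, of x] by (simp add: sm_def chip_def)
qed
qed

lemma L3_princ: "0 \<approx> L3"
  using lin_equiv_step[OF p_in, of "th_mult n0 n1 n2" 0] Lap_p by simp

lemma L2_princ: "\<alpha> < 3 \<Longrightarrow> 0 < i \<Longrightarrow> i < len \<alpha> \<Longrightarrow> 0 \<approx> L2 \<alpha> i"
  using lin_equiv_step[OF vtx_in, of \<alpha> i "th_mult n0 n1 n2" 0] Lap_int by simp

end


context theta
begin

definition "aa \<alpha> = chip (vtx \<alpha> 1) - chip p"
definition "QQ = chip q - chip p"

lemma sm0[simp]: "sm 0 A = 0" by (simp add: sm_def fun_eq_iff)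
lemma sm1[simp]: "sm 1 A = A" by (simp add: sm_def fun_eq_iff)
lemma sm_zero[simp]: "sm k 0 = 0" by (simp add: sm_def fun_eq_iff)

lemma AJ_pair: "\<alpha> < 3 \<Longrightarrow> Suc i \<le> len \<alpha> \<Longrightarrow>
   chip (vtx \<alpha> i) \<approx> chip p + sm (int i) (aa \<alpha>) \<and> chip (vtx \<alpha> (Suc i)) \<approx> chip p + sm (int (Suc i)) (aa \<alpha>)"
proof (induction i)
  case 0
  have "chip (vtx \<alpha> (Suc 0)) = chip p + sm (int (Suc 0)) (aa \<alpha>)"
    by (simp add: aa_def)
  then show ?case by simp
next
  case (Suc i)
  have si: "Suc i \<le> len \<alpha>" using Suc.prems by simp
  note IH = Suc.IH[OF Suc.prems(1) si]
  have IH1: "chip (vtx \<alpha> i) \<approx> chip p + sm (int i) (aa \<alpha>)" by (rule conjunct1[OF IH])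
  have IH2: "chip (vtx \<alpha> (Suc i)) \<approx> chip p + sm (int (Suc i)) (aa \<alpha>)" by (rule conjunct2[OF IH])
  have L: "0 \<approx> L2 \<alpha> (Suc i)" using Suc.prems by (intro L2_princ) auto
  have e: "chip (vtx \<alpha> (Suc (Suc i))) = L2 \<alpha> (Suc i) - chip (vtx \<alpha> i) + sm 2 (chip (vtx \<alpha> (Suc i)))"
    by (simp add: L2_def fun_eq_iff sm_def)
  have "L2 \<alpha> (Suc i) - chip (vtx \<alpha> i) + sm 2 (chip (vtx \<alpha> (Suc i)))
     \<approx> 0 - (chip p + sm (int i) (aa \<alpha>)) + sm 2 (chip p + sm (int (Suc i)) (aa \<alpha>))"
    by (intro le_plus le_minus le_sm le_sym[OF L] IH1 IH2)
  also have "0 - (chip p + sm (int i) (aa \<alpha>)) + sm 2 (chip p + sm (int (Suc i)) (aa \<alpha>))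
      = chip p + sm (int (Suc (Suc i))) (aa \<alpha>)"
    by (simp add: fun_eq_iff sm_def algebra_simps)
  finally have "chip (vtx \<alpha> (Suc (Suc i))) \<approx> chip p + sm (int (Suc (Suc i))) (aa \<alpha>)"
    unfolding e .
  then show ?case using IH2 by (rule conjI[rotated])
qed

lemma AJ: "\<alpha> < 3 \<Longrightarrow> i \<le> len \<alpha> \<Longrightarrow> chip (vtx \<alpha> i) \<approx> chip p + sm (int i) (aa \<alpha>)"
proof (cases i)
  case 0 then show ?thesis by simp
next
  case (Suc j)
  assume "\<alpha> < 3" "i \<le> len \<alpha>"
  then show ?thesis using AJ_pair[of \<alpha> j] Suc by simp
qed

lemma q_AJ: "\<alpha> < 3 \<Longrightarrow> chip q \<approx> chip p + sm (int (len \<alpha>)) (aa \<alpha>)"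
  using AJ[of \<alpha> "len \<alpha>"] by simp

lemma QQ_AJ: "\<alpha> < 3 \<Longrightarrow> QQ \<approx> sm (int (len \<alpha>)) (aa \<alpha>)"
proof -
  assume "\<alpha> < 3"
  then have "chip q - chip p \<approx> chip p + sm (int (len \<alpha>)) (aa \<alpha>) - chip p"
    by (intro le_minus q_AJ le_refl)
  then show ?thesis by (simp add: QQ_def)
qed

lemma aa_sum: "aa 0 + aa 1 + aa 2 \<approx> 0"
proof -
  have "aa 0 + aa 1 + aa 2 = L3" by (simp add: aa_def L3_def fun_eq_iff sm_def)
  then show ?thesis using le_sym[OF L3_princ] by simp
qed

lemma less3: "(\<alpha>::nat) < 3 \<Longrightarrow> \<alpha> = 0 \<or> \<alpha> = 1 \<or> \<alpha> = 2" by arith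

lemma bar_vtx: assumes "\<alpha> < 3" "i \<le> len \<alpha>"
  shows "th_bar n0 n1 n2 (vtx \<alpha> i) = vtx \<alpha> (len \<alpha> - i)"
  unfolding th_bar_def
proof (rule someI2[where a="vtx \<alpha> (len \<alpha> - i)"])
  show "\<exists>\<alpha>' i'. \<alpha>' < 3 \<and> i' \<le> len \<alpha>' \<and> vtx \<alpha> i = vtx \<alpha>' i' \<and> vtx \<alpha> (len \<alpha> - i) = vtx \<alpha>' (len \<alpha>' - i')"
    using assms by blast
next
  fix y assume "\<exists>\<alpha>' i'. \<alpha>' < 3 \<and> i' \<le> len \<alpha>' \<and> vtx \<alpha> i = vtx \<alpha>' i' \<and> y = vtx \<alpha>' (len \<alpha>' - i')"
  then obtain \<alpha>' i' where h: "\<alpha>' < 3" "i' \<le> len \<alpha>'" "vtx \<alpha> i = vtx \<alpha>' i'" "y = vtx \<alpha>' (len \<alpha>' - i')" by blast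
  show "y = vtx \<alpha> (len \<alpha> - i)"
  proof (cases "i = 0")
    case True
    then have "vtx \<alpha>' i' = p" using h by simp
    then have "i' = 0" using vtx_eq_p[OF h(2)] by simp
    then show ?thesis using h True by simp
  next
    case False
    show ?thesis
    proof (cases "i = len \<alpha>")
      case True
      then have "vtx \<alpha>' i' = q" using h by simp
      then have "i' = len \<alpha>'" using vtx_eq_q[OF h(2)] by simp
      then show ?thesis using h True by simp
    next
      case F2: False
      then have "0 < i" "i < len \<alpha>" using False assms by auto
      then have "\<alpha>' = \<alpha> \<and> i' = i" using vtx_eq_int[OF h(2)] h(3) by metis
      then show ?thesis using h by simp
    qed
  qed
qed

abbreviation "bar \<equiv> th_bar n0 n1 n2"

lemma bar_in: "x \<in> VV \<Longrightarrow> bar x \<in> VV"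
proof -
  assume "x \<in> VV"
  then obtain \<alpha> i where h: "\<alpha> < 3" "i \<le> len \<alpha>" "x = vtx \<alpha> i" using V_cases by blast
  then show ?thesis using bar_vtx[OF h(1) h(2)] vtx_in[OF h(1), of "len \<alpha> - i"] by simp
qed

lemma bar_bar: "x \<in> VV \<Longrightarrow> bar (bar x) = x"
proof -
  assume "x \<in> VV"
  then obtain \<alpha> i where h: "\<alpha> < 3" "i \<le> len \<alpha>" "x = vtx \<alpha> i" using V_cases by blast
  then show ?thesis using bar_vtx[OF h(1) h(2)] bar_vtx[of \<alpha> "len \<alpha> - i"] by simp
qed

lemma bar_K: "x \<in> VV \<Longrightarrow> chip x + chip (bar x) \<approx> chip p + chip q"
proof -
  assume "x \<in> VV"
  then obtain \<alpha> i where h: "\<alpha> < 3" "i \<le> len \<alpha>" "x = vtx \<alpha> i" using V_cases by blast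
  have b: "bar x = vtx \<alpha> (len \<alpha> - i)" using h bar_vtx[OF h(1) h(2)] by simp
  have c1: "chip x \<approx> chip p + sm (int i) (aa \<alpha>)" unfolding h(3) by (rule AJ) (use h in auto)
  have c2: "chip (bar x) \<approx> chip p + sm (int (len \<alpha> - i)) (aa \<alpha>)" unfolding b by (rule AJ) (use h in auto)
  have "chip x + chip (bar x) \<approx> (chip p + sm (int i) (aa \<alpha>)) + (chip p + sm (int (len \<alpha> - i)) (aa \<alpha>))"
    by (rule le_plus[OF c1 c2])
  also have "(chip p + sm (int i) (aa \<alpha>)) + (chip p + sm (int (len \<alpha> - i)) (aa \<alpha>))
      = chip p + (chip p + sm (int (len \<alpha>)) (aa \<alpha>))"
    using h by (simp add: fun_eq_iff sm_def algebra_simps of_nat_diff)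
  also have "chip p + (chip p + sm (int (len \<alpha>)) (aa \<alpha>)) \<approx> chip p + chip q"
    using h by (intro le_plus le_refl le_sym[OF q_AJ])
  finally show ?thesis .
qed

end


context theta
begin

lemma eq_le: "A = B \<Longrightarrow> B \<approx> C \<Longrightarrow> A \<approx> C" by simp
lemma le_eq: "A \<approx> B \<Longrightarrow> B = C \<Longrightarrow> A \<approx> C" by simp

definition "AC c = (\<lambda>x. \<Sum>\<alpha><3. c \<alpha> * aa \<alpha> x)"
definition "GG t = (\<lambda>x. \<Sum>\<alpha><3. chip (vtx \<alpha> (nat (t \<alpha>))) x)"
definition "bnd t \<longleftrightarrow> (\<forall>\<alpha><3. 0 \<le> t \<alpha> \<and> t \<alpha> \<le> int (len \<alpha>))"

lemma AC3: "AC c = sm (c 0) (aa 0) + sm (c 1) (aa 1) + sm (c 2) (aa 2)"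
  by (simp add: AC_def fun_eq_iff sm_def sum3)

lemma AC_add: "AC (\<lambda>\<alpha>. c \<alpha> + d \<alpha>) = AC c + AC d"
  by (simp add: AC_def fun_eq_iff algebra_simps sum.distrib)

lemma AC_shift: "AC (\<lambda>\<alpha>. c \<alpha> + k) \<approx> AC c"
proof -
  have e: "AC (\<lambda>\<alpha>. c \<alpha> + k) = AC c + sm k (aa 0 + aa 1 + aa 2)"
    by (simp add: AC3 fun_eq_iff sm_def algebra_simps)
  have l: "AC c + sm k (aa 0 + aa 1 + aa 2) \<approx> AC c + sm k 0"
    by (intro le_plus le_refl le_sm aa_sum)
  have "AC c + sm k (0::nat\<times>nat\<Rightarrow>int) = AC c" by (simp add: fun_eq_iff sm_def)
  then show ?thesis using e l by metis
qed

lemma AC_delta: "\<gamma> < 3 \<Longrightarrow> AC (\<lambda>\<alpha>. if \<alpha> = \<gamma> then k else 0) = sm k (aa \<gamma>)"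
  by (simp add: AC_def fun_eq_iff sm_def if_distrib[where f="\<lambda>c. c * _"] sum.delta cong: if_cong)

lemma AC_Q: "\<gamma> < 3 \<Longrightarrow> AC (\<lambda>\<alpha>. if \<alpha> = \<gamma> then int (len \<gamma>) * k else 0) \<approx> sm k QQ"
proof -
  assume g: "\<gamma> < 3"
  have e: "AC (\<lambda>\<alpha>. if \<alpha> = \<gamma> then int (len \<gamma>) * k else 0) = sm k (sm (int (len \<gamma>)) (aa \<gamma>))"
    using g by (simp add: AC_delta sm_def fun_eq_iff algebra_simps)
  have "sm k (sm (int (len \<gamma>)) (aa \<gamma>)) \<approx> sm k QQ" using g by (intro le_sm le_sym[OF QQ_AJ])
  then show ?thesis using e by simp
qed

lemma argmin3: "\<exists>\<gamma><3. \<forall>\<alpha><3. (t::nat \<Rightarrow> int) \<gamma> \<le> t \<alpha>"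
proof -
  have "t 0 \<le> t 1 \<and> t 0 \<le> t 2 \<or> t 1 \<le> t 0 \<and> t 1 \<le> t 2 \<or> t 2 \<le> t 0 \<and> t 2 \<le> t 1" by linarith
  then show ?thesis
  proof (elim disjE)
    assume "t 0 \<le> t 1 \<and> t 0 \<le> t 2" then show ?thesis using less3 by (intro exI[of _ 0]) auto
  next
    assume "t 1 \<le> t 0 \<and> t 1 \<le> t 2" then show ?thesis using less3 by (intro exI[of _ 1]) auto
  next
    assume "t 2 \<le> t 0 \<and> t 2 \<le> t 1" then show ?thesis using less3 by (intro exI[of _ 2]) auto
  qed
qed

lemma zero_min: "bnd t \<Longrightarrow> \<exists>t'. bnd t' \<and> AC t \<approx> AC t' \<and> (\<exists>\<gamma><3. t' \<gamma> = 0)"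
proof -
  assume b: "bnd t"
  obtain \<gamma> where g: "\<gamma> < 3" "\<forall>\<alpha><3. t \<gamma> \<le> t \<alpha>" using argmin3 by blast
  let ?t = "\<lambda>\<alpha>. t \<alpha> + - t \<gamma>"
  have "bnd ?t" unfolding bnd_def
  proof (intro allI impI)
    fix \<alpha> :: nat assume a: "\<alpha> < 3"
    then have "0 \<le> t \<alpha>" "t \<alpha> \<le> int (len \<alpha>)" "0 \<le> t \<gamma>" "t \<gamma> \<le> t \<alpha>" using b g unfolding bnd_def by auto
    then show "0 \<le> t \<alpha> + - t \<gamma> \<and> t \<alpha> + - t \<gamma> \<le> int (len \<alpha>)" by simp
  qed
  moreover have "AC t \<approx> AC ?t" by (rule le_sym[OF AC_shift])
  moreover have "?t \<gamma> = 0" by simp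
  ultimately show ?thesis using g by blast
qed

lemma Qstep: "bnd t \<Longrightarrow> \<exists>t'. bnd t' \<and> AC t + QQ \<approx> AC t'"
proof -
  assume b: "bnd t"
  obtain \<gamma> where g: "\<gamma> < 3" "\<forall>\<alpha><3. t \<gamma> \<le> t \<alpha>" using argmin3 by blast
  let ?t1 = "\<lambda>\<alpha>. t \<alpha> + - t \<gamma>"
  let ?d = "\<lambda>\<alpha>. if \<alpha> = \<gamma> then int (len \<gamma>) * 1 else 0"
  let ?t2 = "\<lambda>\<alpha>. ?t1 \<alpha> + ?d \<alpha>"
  have "bnd ?t2" unfolding bnd_def
  proof (intro allI impI)
    fix \<alpha> :: nat assume a: "\<alpha> < 3"
    then have h: "0 \<le> t \<alpha>" "t \<alpha> \<le> int (len \<alpha>)" "0 \<le> t \<gamma>" "t \<gamma> \<le> t \<alpha>" using b g unfolding bnd_def by auto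
    show "0 \<le> ?t2 \<alpha> \<and> ?t2 \<alpha> \<le> int (len \<alpha>)"
    proof (cases "\<alpha> = \<gamma>")
      case True then show ?thesis by simp
    next
      case False then show ?thesis using h by simp
    qed
  qed
  have l1: "AC t + QQ \<approx> AC ?t1 + sm 1 QQ"
    by (intro le_plus le_sym[OF AC_shift]) simp
  have l2: "AC ?t1 + sm 1 QQ \<approx> AC ?t1 + AC ?d"
    by (intro le_plus le_refl le_sym[OF AC_Q[OF g(1)]])
  have "AC ?t1 + AC ?d = AC ?t2" by (rule AC_add[symmetric])
  then have "AC t + QQ \<approx> AC ?t2" using le_trans[OF l1 l2] by simp
  then show ?thesis using \<open>bnd ?t2\<close> by blast
qed

lemma QK: "bnd t \<Longrightarrow> \<exists>t'. bnd t' \<and> AC t + sm (int K) QQ \<approx> AC t'"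
proof (induction K arbitrary: t)
  case 0 then show ?case by (intro exI[of _ t]) simp
next
  case (Suc K)
  obtain t1 where t1: "bnd t1" "AC t + QQ \<approx> AC t1" using Qstep[OF Suc.prems] by blast
  obtain t2 where t2: "bnd t2" "AC t1 + sm (int K) QQ \<approx> AC t2" using Suc.IH[OF t1(1)] by blast
  have e: "AC t + sm (int (Suc K)) QQ = (AC t + QQ) + sm (int K) QQ"
    by (simp add: fun_eq_iff sm_def algebra_simps)
  have "(AC t + QQ) + sm (int K) QQ \<approx> AC t1 + sm (int K) QQ" by (intro le_plus t1(2) le_refl)
  then have "AC t + sm (int (Suc K)) QQ \<approx> AC t2" unfolding e using t2(2) by (rule le_trans)
  then show ?case using t2(1) by blast
qed

lemma GG_AJ: "bnd t \<Longrightarrow> GG t \<approx> sm 3 (chip p) + AC t"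
proof -
  assume b: "bnd t"
  have h: "chip (vtx \<alpha> (nat (t \<alpha>))) \<approx> chip p + sm (t \<alpha>) (aa \<alpha>)" if "\<alpha> < 3" for \<alpha>
  proof -
    have "chip (vtx \<alpha> (nat (t \<alpha>))) \<approx> chip p + sm (int (nat (t \<alpha>))) (aa \<alpha>)"
      using b that unfolding bnd_def by (intro AJ) auto
    moreover have "int (nat (t \<alpha>)) = t \<alpha>" using b that unfolding bnd_def by auto
    ultimately show ?thesis by simp
  qed
  have e1: "GG t = chip (vtx 0 (nat (t 0))) + chip (vtx 1 (nat (t 1))) + chip (vtx 2 (nat (t 2)))"
    by (simp add: GG_def fun_eq_iff sum3)
  have l: "chip (vtx 0 (nat (t 0))) + chip (vtx 1 (nat (t 1))) + chip (vtx 2 (nat (t 2)))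
     \<approx> (chip p + sm (t 0) (aa 0)) + (chip p + sm (t 1) (aa 1)) + (chip p + sm (t 2) (aa 2))"
    by (intro le_plus h) auto
  have e2: "(chip p + sm (t 0) (aa 0)) + (chip p + sm (t 1) (aa 1)) + (chip p + sm (t 2) (aa 2)) = sm 3 (chip p) + AC t"
    by (simp add: AC3 fun_eq_iff sm_def algebra_simps)
  show ?thesis using l unfolding e1 e2 .
qed

lemma GG_div: "bnd t \<Longrightarrow> is_div VV (GG t)"
proof -
  assume b: "bnd t"
  have "vtx \<alpha> (nat (t \<alpha>)) \<in> VV" if "\<alpha> < 3" for \<alpha>
    using b that vtx_in unfolding bnd_def by (simp add: nat_le_iff)
  then show ?thesis unfolding is_div_def GG_def
  proof (intro allI impI sum.neutral ballI)
    fix x \<alpha> assume h: "\<And>\<alpha>. \<alpha> < 3 \<Longrightarrow> vtx \<alpha> (nat (t \<alpha>)) \<in> VV" "x \<notin> VV" "\<alpha> \<in> {..<3::nat}"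
    then have "x \<noteq> vtx \<alpha> (nat (t \<alpha>))" by auto
    then show "chip (vtx \<alpha> (nat (t \<alpha>))) x = 0" by (simp add: chip_def)
  qed
qed

lemma GG_p: "bnd t \<Longrightarrow> \<gamma> < 3 \<Longrightarrow> t \<gamma> = 0 \<Longrightarrow> effective (GG t - chip p)"
proof -
  assume b: "bnd t" and g: "\<gamma> < 3" "t \<gamma> = 0"
  have "chip p x \<le> GG t x" for x
  proof -
    have "chip p x = chip (vtx \<gamma> (nat (t \<gamma>))) x" using g by simp
    also have "\<dots> \<le> GG t x" unfolding GG_def
      by (rule member_le_sum) (use g chip_nonneg in auto)
    finally show ?thesis .
  qed
  then show ?thesis by (simp add: effective_def)
qed

lemma cover: "d \<ge> 2 \<Longrightarrow> \<exists>E. is_div VV E \<and> effective E \<and> sm d (chip p) + AC c \<approx> E"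
proof -
  assume d: "d \<ge> 2"
  define k where "k = \<bar>c 0\<bar> + \<bar>c 1\<bar> + \<bar>c 2\<bar>"
  define s where "s = (\<lambda>\<alpha>. c \<alpha> + k)"
  have s0: "\<alpha> < 3 \<Longrightarrow> s \<alpha> \<ge> 0" for \<alpha> using less3[of \<alpha>] unfolding s_def k_def by auto
  define r where "r = (\<lambda>\<alpha>. s \<alpha> mod int (len \<alpha>))"
  define K where "K = (\<lambda>\<alpha>. s \<alpha> div int (len \<alpha>))"
  have lp: "int (len \<alpha>) > 0" for \<alpha> using len_pos[of \<alpha>] by simp
  have br: "bnd r" unfolding bnd_def r_def using lp
    by (metis order.strict_implies_order pos_mod_bound pos_mod_sign)
  have K0: "\<alpha> < 3 \<Longrightarrow> K \<alpha> \<ge> 0" for \<alpha> unfolding K_def using s0 lp by (simp add: pos_imp_zdiv_nonneg_iff)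
  have sdec: "s \<alpha> = r \<alpha> + int (len \<alpha>) * K \<alpha>" for \<alpha> unfolding r_def K_def by simp
  have e1: "AC s = AC r + (AC (\<lambda>\<alpha>. if \<alpha> = 0 then int (len 0) * K 0 else 0)
       + AC (\<lambda>\<alpha>. if \<alpha> = 1 then int (len 1) * K 1 else 0) + AC (\<lambda>\<alpha>. if \<alpha> = 2 then int (len 2) * K 2 else 0))"
    by (simp add: AC3 sdec fun_eq_iff sm_def algebra_simps)
  have l1: "AC r + (AC (\<lambda>\<alpha>. if \<alpha> = 0 then int (len 0) * K 0 else 0)
       + AC (\<lambda>\<alpha>. if \<alpha> = 1 then int (len 1) * K 1 else 0) + AC (\<lambda>\<alpha>. if \<alpha> = 2 then int (len 2) * K 2 else 0))
     \<approx> AC r + (sm (K 0) QQ + sm (K 1) QQ + sm (K 2) QQ)"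
    by (intro le_plus le_refl AC_Q) auto
  have e2: "AC r + (sm (K 0) QQ + sm (K 1) QQ + sm (K 2) QQ) = AC r + sm (int (nat (K 0 + K 1 + K 2))) QQ"
    using K0[of 0] K0[of 1] K0[of 2] by (simp add: fun_eq_iff sm_def algebra_simps)
  have es: "AC s \<approx> AC r + sm (int (nat (K 0 + K 1 + K 2))) QQ" using l1 unfolding e1 e2 .
  obtain t1 where t1: "bnd t1" "AC r + sm (int (nat (K 0 + K 1 + K 2))) QQ \<approx> AC t1"
    using QK[OF br] by blast
  obtain t2 \<gamma> where t2: "bnd t2" "AC t1 \<approx> AC t2" "\<gamma> < 3" "t2 \<gamma> = 0"
    using zero_min[OF t1(1)] by blast
  have c1: "AC c \<approx> AC s" unfolding s_def by (rule le_sym[OF AC_shift])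
  have c2: "AC c \<approx> AC t2" using le_trans[OF le_trans[OF le_trans[OF c1 es] t1(2)] t2(2)] .
  have l3: "sm d (chip p) + AC c \<approx> sm d (chip p) + AC t2" by (intro le_plus le_refl c2)
  have e3: "sm d (chip p) + AC t2 = sm (d - 3) (chip p) + (sm 3 (chip p) + AC t2)"
    by (simp add: fun_eq_iff sm_def algebra_simps)
  have l4: "sm (d - 3) (chip p) + (sm 3 (chip p) + AC t2) \<approx> sm (d - 3) (chip p) + GG t2"
    by (intro le_plus le_refl le_sym[OF GG_AJ[OF t2(1)]])
  have e4: "sm (d - 3) (chip p) + GG t2 = sm (d - 2) (chip p) + (GG t2 - chip p)"
    by (simp add: fun_eq_iff sm_def algebra_simps)
  have eq: "sm d (chip p) + AC c \<approx> sm (d - 2) (chip p) + (GG t2 - chip p)"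
    using le_trans[OF l3[unfolded e3] l4] unfolding e4 .
  moreover have "is_div VV (sm (d - 2) (chip p) + (GG t2 - chip p))"
    using GG_div[OF t2(1)] by simp
  moreover have "effective (sm (d - 2) (chip p) + (GG t2 - chip p))"
    using GG_p[OF t2(1) t2(3) t2(4)] d by simp
  ultimately show ?thesis by blast
qed

end


context graph
begin

lemma LS_formula: "x \<in> V \<Longrightarrow> LS V m f x = (\<Sum>w\<in>V. int (m x w) * (f w - f x))"
proof -
  assume x: "x \<in> V"
  have "LS V m f x = f x * Lap V m x x + (\<Sum>w\<in>V-{x}. f w * Lap V m w x)"
    unfolding LS_def using x fin by (simp add: sum.remove)
  also have "(\<Sum>w\<in>V-{x}. f w * Lap V m w x) = (\<Sum>w\<in>V-{x}. f w * int (m x w))"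
    by (rule sum.cong) (auto simp: Lap_def)
  also have "Lap V m x x = - (\<Sum>w\<in>V-{x}. int (m x w))"
    using x fin by (simp add: Lap_def val_def sum.remove mdiag)
  finally have e1: "LS V m f x = (\<Sum>w\<in>V-{x}. f w * int (m x w)) - f x * (\<Sum>w\<in>V-{x}. int (m x w))"
    by simp
  have "(\<Sum>w\<in>V. int (m x w) * (f w - f x)) = (\<Sum>w\<in>V-{x}. int (m x w) * (f w - f x))"
    using x fin by (simp add: sum.remove mdiag)
  also have "\<dots> = (\<Sum>w\<in>V-{x}. f w * int (m x w)) - f x * (\<Sum>w\<in>V-{x}. int (m x w))"
    by (simp add: algebra_simps sum_subtractf sum_distrib_left)
  finally show ?thesis using e1 by simp
qed

lemma LS_max: assumes x: "x \<in> V" and mx: "\<forall>w\<in>V. f w \<le> f x"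
  shows "LS V m f x \<le> - (\<Sum>w\<in>{w\<in>V. f w \<noteq> f x}. int (m x w))"
proof -
  have "LS V m f x = (\<Sum>w\<in>V. int (m x w) * (f w - f x))" by (rule LS_formula[OF x])
  also have "\<dots> \<le> (\<Sum>w\<in>V. if f w \<noteq> f x then - int (m x w) else 0)"
  proof (rule sum_mono)
    fix w assume w: "w \<in> V"
    show "int (m x w) * (f w - f x) \<le> (if f w \<noteq> f x then - int (m x w) else 0)"
    proof (cases "f w \<noteq> f x")
      case True
      then have "f w - f x \<le> -1" using mx w by fastforce
      then have "int (m x w) * (f w - f x) \<le> int (m x w) * (-1)"
        by (intro mult_left_mono) auto
      then show ?thesis using True by simp
    qed simp
  qed
  also have "\<dots> = (\<Sum>w\<in>{w\<in>V. f w \<noteq> f x}. - int (m x w))"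
    by (rule sum.inter_filter[symmetric]) (rule fin)
  also have "\<dots> = - (\<Sum>w\<in>{w\<in>V. f w \<noteq> f x}. int (m x w))"
    by (rule sum_negf)
  finally show ?thesis .
qed

definition "eS S = (\<Sum>x\<in>S. \<Sum>y\<in>V-S. int (m x y))"

lemma principal_cases:
  assumes "0 \<approx> Z"
  shows "(\<forall>x\<in>V. Z x = 0) \<or> (\<exists>S. S \<subseteq> V \<and> S \<noteq> {} \<and> S \<noteq> V \<and> (\<Sum>x\<in>S. Z x) \<le> - eS S)"
proof -
  obtain f where Zf: "Z = LS V m f" using assms by (auto simp: le_iff)
  define M where "M = Max (f ` V)"
  define S where "S = {x\<in>V. f x = M}"
  have fM: "\<forall>w\<in>V. f w \<le> M" unfolding M_def using fin by (simp add: Max_ge)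
  have SV: "S \<subseteq> V" unfolding S_def by auto
  have "M \<in> f ` V" unfolding M_def using fin ne by (intro Max_in) auto
  then obtain x0 where "x0 \<in> V" "f x0 = M" by auto
  then have Sne: "S \<noteq> {}" unfolding S_def by auto
  show ?thesis
  proof (cases "S = V")
    case True
    then have "\<forall>w\<in>V. f w = M" unfolding S_def by auto
    then have "Z x = 0" if "x \<in> V" for x
      unfolding Zf LS_formula[OF that] using that by (intro sum.neutral) auto
    then show ?thesis by blast
  next
    case False
    have "Z x \<le> - (\<Sum>y\<in>V-S. int (m x y))" if xs: "x \<in> S" for x
    proof -
      have xV: "x \<in> V" and fx: "f x = M" using xs unfolding S_def by auto
      have e: "{w\<in>V. f w \<noteq> f x} = V - S" unfolding S_def using fx by auto
      have "\<forall>w\<in>V. f w \<le> f x" using fM fx by simp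
      from LS_max[OF xV this] show ?thesis unfolding Zf e .
    qed
    then have "(\<Sum>x\<in>S. Z x) \<le> (\<Sum>x\<in>S. - (\<Sum>y\<in>V-S. int (m x y)))" by (rule sum_mono)
    also have "\<dots> = - eS S" unfolding eS_def by (simp add: sum_negf)
    finally show ?thesis using SV Sne False by blast
  qed
qed

end


lemma sum_delta2: "finite S \<Longrightarrow> finite T \<Longrightarrow>
   (\<Sum>x\<in>S. \<Sum>y\<in>T. (of_bool (x = a \<and> y = b) :: int)) = of_bool (a \<in> S \<and> b \<in> T)"
proof -
  assume f: "finite S" "finite T"
  have "(\<Sum>x\<in>S. \<Sum>y\<in>T. (of_bool (x = a \<and> y = b) :: int)) = (\<Sum>x\<in>S. if x = a then (\<Sum>y\<in>T. (of_bool (y = b) :: int)) else 0)"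
    by (intro sum.cong) auto
  also have "\<dots> = (if a \<in> S then (\<Sum>y\<in>T. (of_bool (y = b) :: int)) else 0)"
    using f by (simp add: sum.delta)
  also have "(\<Sum>y\<in>T. (of_bool (y = b) :: int)) = (\<Sum>y\<in>T. if y = b then 1 else 0)"
    by (intro sum.cong) auto
  also have "\<dots> = (if b \<in> T then 1 else 0)" using f by (simp add: sum.delta)
  finally show ?thesis by simp
qed

lemma crossing: "(P::nat \<Rightarrow> bool) i \<Longrightarrow> \<not> P j \<Longrightarrow> i < j \<Longrightarrow> \<exists>k. i \<le> k \<and> k < j \<and> P k \<and> \<not> P (Suc k)"
proof (induction j)
  case 0 then show ?case by simp
next
  case (Suc j)
  show ?case
  proof (cases "P j")
    case True then show ?thesis using Suc by (intro exI[of _ j]) auto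
  next
    case False
    then have "i < j" using Suc by (cases "i = j") auto
    then show ?thesis using Suc.IH[OF Suc.prems(1) False] by auto
  qed
qed

context theta
begin

definition "Ed = (SIGMA \<alpha>:{..<3}. {..<len \<alpha>})"
definition "cr S e \<longleftrightarrow> ((vtx (fst e) (snd e) \<in> S) \<noteq> (vtx (fst e) (Suc (snd e)) \<in> S))"

lemma finEd: "finite Ed" unfolding Ed_def by auto

lemma eS_card: assumes SV: "S \<subseteq> VV" shows "eS S = int (card (Ed \<inter> {e. cr S e}))"
proof -
  have finS: "finite S" by (rule finite_subset[OF SV finV])
  have m2: "int (mm x y) = (\<Sum>e\<in>Ed. of_bool ({x,y} = {vtx (fst e) (snd e), vtx (fst e) (Suc (snd e))}))" for x y
    unfolding mm_sum Ed_def by (subst sum.Sigma; simp add: split_beta del: sum_of_bool_eq)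
  have "eS S = (\<Sum>x\<in>S. \<Sum>y\<in>VV-S. \<Sum>e\<in>Ed. (of_bool ({x,y} = {vtx (fst e) (snd e), vtx (fst e) (Suc (snd e))}) :: int))"
    unfolding eS_def m2 ..
  also have "\<dots> = (\<Sum>x\<in>S. \<Sum>e\<in>Ed. \<Sum>y\<in>VV-S. (of_bool ({x,y} = {vtx (fst e) (snd e), vtx (fst e) (Suc (snd e))}) :: int))"
    by (rule sum.cong[OF refl]) (rule sum.swap)
  also have "\<dots> = (\<Sum>e\<in>Ed. \<Sum>x\<in>S. \<Sum>y\<in>VV-S. (of_bool ({x,y} = {vtx (fst e) (snd e), vtx (fst e) (Suc (snd e))}) :: int))"
    by (rule sum.swap)
  also have "\<dots> = (\<Sum>e\<in>Ed. (of_bool (cr S e) :: int))"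
  proof (rule sum.cong[OF refl])
    fix e assume e: "e \<in> Ed"
    let ?a = "vtx (fst e) (snd e)" and ?b = "vtx (fst e) (Suc (snd e))"
    have ab: "?a \<noteq> ?b" using e edge_ne unfolding Ed_def by auto
    have aV: "?a \<in> VV" and bV: "?b \<in> VV" using e vtx_in unfolding Ed_def by auto
    have "(of_bool ({x,y} = {?a, ?b}) :: int) = of_bool (x = ?a \<and> y = ?b) + of_bool (x = ?b \<and> y = ?a)" for x y
      using ab by (auto simp: doubleton_eq_iff)
    then have "(\<Sum>x\<in>S. \<Sum>y\<in>VV-S. (of_bool ({x,y} = {?a, ?b}) :: int)) =
        (\<Sum>x\<in>S. \<Sum>y\<in>VV-S. (of_bool (x = ?a \<and> y = ?b) :: int)) + (\<Sum>x\<in>S. \<Sum>y\<in>VV-S. (of_bool (x = ?b \<and> y = ?a) :: int))"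
      by (simp add: sum.distrib)
    also have "\<dots> = of_bool (?a \<in> S \<and> ?b \<in> VV - S) + of_bool (?b \<in> S \<and> ?a \<in> VV - S)"
      using finS finV by (simp only: sum_delta2[OF finS finite_Diff[OF finV]])
    also have "\<dots> = of_bool (cr S e)" unfolding cr_def using aV bV by auto
    finally show "(\<Sum>x\<in>S. \<Sum>y\<in>VV-S. (of_bool ({x,y} = {?a, ?b}) :: int)) = of_bool (cr S e)" .
  qed
  also have "\<dots> = int (card (Ed \<inter> {e. cr S e}))" using finEd by simp
  finally show ?thesis .
qed

lemma path_cross: assumes "\<alpha> < 3" "i < j" "j \<le> len \<alpha>" "(vtx \<alpha> i \<in> S) \<noteq> (vtx \<alpha> j \<in> S)"
  shows "\<exists>k. i \<le> k \<and> k < j \<and> (\<alpha>, k) \<in> Ed \<inter> {e. cr S e}"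
proof -
  let ?P = "\<lambda>k. (vtx \<alpha> k \<in> S) = (vtx \<alpha> i \<in> S)"
  obtain k where k: "i \<le> k" "k < j" "?P k" "\<not> ?P (Suc k)"
    using crossing[of ?P i j] assms by auto
  then have "(\<alpha>, k) \<in> Ed \<inter> {e. cr S e}" using assms unfolding Ed_def cr_def by auto
  then show ?thesis using k by blast
qed

lemma cut3: assumes "S \<subseteq> VV" "(p \<in> S) \<noteq> (q \<in> S)" shows "eS S \<ge> 3"
proof -
  have "\<exists>k. (\<alpha>, k) \<in> Ed \<inter> {e. cr S e}" if "\<alpha> < 3" for \<alpha>
    using path_cross[of \<alpha> 0 "len \<alpha>" S] assms that len_pos[of \<alpha>] by auto
  note ex = this
  obtain k0 where k0: "(0, k0) \<in> Ed \<inter> {e. cr S e}" using ex[of 0] by auto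
  obtain k1 where k1: "(1, k1) \<in> Ed \<inter> {e. cr S e}" using ex[of 1] by auto
  obtain k2 where k2: "(2, k2) \<in> Ed \<inter> {e. cr S e}" using ex[of 2] by auto
  note k = k0 k1 k2
  have "card {(0::nat, k0), (1, k1), (2, k2)} \<le> card (Ed \<inter> {e. cr S e})"
    using k finEd by (intro card_mono) auto
  moreover have "card {(0::nat, k0), (1, k1), (2, k2)} = 3" by simp
  ultimately show ?thesis using eS_card[OF assms(1)] by simp
qed

lemma cut2: assumes SV: "S \<subseteq> VV" and ne: "S \<noteq> {}" and nV: "S \<noteq> VV" shows "eS S \<ge> 2"
proof (cases "(p \<in> S) = (q \<in> S)")
  case False then show ?thesis using cut3[OF SV] by fastforce
next
  case True
  have "\<exists>x\<in>VV. (x \<in> S) \<noteq> (p \<in> S)"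
  proof (cases "p \<in> S")
    case True then show ?thesis using SV nV by blast
  next
    case False then show ?thesis using SV ne by blast
  qed
  then obtain x where x: "x \<in> VV" "(x \<in> S) \<noteq> (p \<in> S)" by blast
  obtain \<alpha> i where h: "\<alpha> < 3" "i \<le> len \<alpha>" "x = vtx \<alpha> i" using V_cases[OF x(1)] by blast
  have i0: "i \<noteq> 0"
  proof
    assume "i = 0" then have "x = p" using h by simp
    then show False using x by simp
  qed
  have il: "i \<noteq> len \<alpha>" using x h True by auto
  obtain k1 where k1: "k1 < i" "(\<alpha>, k1) \<in> Ed \<inter> {e. cr S e}"
    using path_cross[of \<alpha> 0 i S] h x i0 by auto
  obtain k2 where k2: "i \<le> k2" "(\<alpha>, k2) \<in> Ed \<inter> {e. cr S e}"
    using path_cross[of \<alpha> i "len \<alpha>" S] h x il True by auto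
  have "card {(\<alpha>, k1), (\<alpha>, k2)} \<le> card (Ed \<inter> {e. cr S e})"
    using k1 k2 finEd by (intro card_mono) auto
  moreover have "card {(\<alpha>, k1), (\<alpha>, k2)} = 2" using k1 k2 by simp
  ultimately show ?thesis using eS_card[OF SV] by simp
qed

lemma sum_chip_S: "S \<subseteq> VV \<Longrightarrow> (\<Sum>z\<in>S. chip x z) = of_bool (x \<in> S)"
  using finV by (simp add: chip_def rev_finite_subset)

lemma N1: assumes "x \<in> VV" "y \<in> VV" "chip x \<approx> chip y" shows "x = y"
proof (rule ccontr)
  assume xy: "x \<noteq> y"
  have "0 \<approx> chip x - chip y" using assms(3) le_shift le_sym by blast
  then have "(\<forall>z\<in>VV. (chip x - chip y) z = 0) \<or> (\<exists>S. S \<subseteq> VV \<and> S \<noteq> {} \<and> S \<noteq> VV \<and> (\<Sum>z\<in>S. (chip x - chip y) z) \<le> - eS S)"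
    by (rule principal_cases)
  then show False
  proof
    assume "\<forall>z\<in>VV. (chip x - chip y) z = 0"
    then have "(chip x - chip y) x = 0" using assms by blast
    then show False using xy by (simp add: chip_def)
  next
    assume "\<exists>S. S \<subseteq> VV \<and> S \<noteq> {} \<and> S \<noteq> VV \<and> (\<Sum>z\<in>S. (chip x - chip y) z) \<le> - eS S"
    then obtain S where S: "S \<subseteq> VV" "S \<noteq> {}" "S \<noteq> VV" "(\<Sum>z\<in>S. (chip x - chip y) z) \<le> - eS S" by blast
    have "(\<Sum>z\<in>S. (chip x - chip y) z) = of_bool (x \<in> S) - of_bool (y \<in> S)"
      using S(1) by (simp add: sum_subtractf sum_chip_S)
    then have "(\<Sum>z\<in>S. (chip x - chip y) z) \<ge> -1" by simp
    moreover have "eS S \<ge> 2" using cut2 S by blast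
    ultimately show False using S(4) by simp
  qed
qed

lemma NK: assumes "g1 \<in> VV" "g2 \<in> VV" "chip p + chip g1 \<approx> chip q + chip g2" shows "g1 = q"
proof (rule ccontr)
  assume gq: "g1 \<noteq> q"
  let ?Z = "chip p + chip g1 - (chip q + chip g2)"
  have "0 \<approx> ?Z" using assms(3) le_shift le_sym by blast
  then have "(\<forall>z\<in>VV. ?Z z = 0) \<or> (\<exists>S. S \<subseteq> VV \<and> S \<noteq> {} \<and> S \<noteq> VV \<and> (\<Sum>z\<in>S. ?Z z) \<le> - eS S)"
    by (rule principal_cases)
  then show False
  proof
    assume "\<forall>z\<in>VV. ?Z z = 0"
    then have "?Z q = 0" by simp
    then show False using gq by (simp add: chip_def split: if_splits)
  next
    assume "\<exists>S. S \<subseteq> VV \<and> S \<noteq> {} \<and> S \<noteq> VV \<and> (\<Sum>z\<in>S. ?Z z) \<le> - eS S"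
    then obtain S where S: "S \<subseteq> VV" "S \<noteq> {}" "S \<noteq> VV" "(\<Sum>z\<in>S. ?Z z) \<le> - eS S" by blast
    have sZ: "(\<Sum>z\<in>S. ?Z z) = of_bool (p \<in> S) + of_bool (g1 \<in> S) - of_bool (q \<in> S) - of_bool (g2 \<in> S)"
      using S(1) by (simp add: sum_subtractf sum.distrib sum_chip_S)
    have e2: "eS S \<ge> 2" using cut2 S by blast
    have pq: "(p \<in> S) \<noteq> (q \<in> S)" using S(4) sZ e2
      by (cases "p \<in> S"; cases "q \<in> S"; cases "g1 \<in> S"; cases "g2 \<in> S") simp_all
    have "eS S \<ge> 3" using cut3[OF S(1) pq] .
    then show False using S(4) sZ
      by (cases "p \<in> S"; cases "q \<in> S"; cases "g1 \<in> S"; cases "g2 \<in> S") simp_all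
  qed
qed

lemma rep_chip: "x \<in> VV \<Longrightarrow> \<exists>c. chip x \<approx> chip p + AC c"
proof -
  assume "x \<in> VV"
  then obtain \<alpha> i where h: "\<alpha> < 3" "i \<le> len \<alpha>" "x = vtx \<alpha> i" using V_cases by blast
  have "chip x \<approx> chip p + sm (int i) (aa \<alpha>)" unfolding h(3) by (rule AJ[OF h(1) h(2)])
  moreover have "sm (int i) (aa \<alpha>) = AC (\<lambda>\<beta>. if \<beta> = \<alpha> then int i else 0)" using AC_delta[OF h(1)] by simp
  ultimately show ?thesis by auto
qed

lemma AC_sm: "AC (\<lambda>\<alpha>. k * c \<alpha>) = sm k (AC c)"
  by (simp add: AC_def fun_eq_iff sm_def sum_distrib_left algebra_simps)

lemma rep_aux: "finite A \<Longrightarrow> A \<subseteq> VV \<Longrightarrow>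
   \<exists>c. (\<lambda>y. \<Sum>x\<in>A. D x * chip x y) \<approx> sm (\<Sum>x\<in>A. D x) (chip p) + AC c"
proof (induction A rule: finite_induct)
  case empty
  have "(\<lambda>y. \<Sum>x\<in>{}. D x * chip x y) = sm (\<Sum>x\<in>{}. D x) (chip p) + AC (\<lambda>_. 0)"
    by (simp add: fun_eq_iff AC_def sm_def)
  then show ?case by (metis le_refl)
next
  case (insert x A)
  have xV: "x \<in> VV" and AV: "A \<subseteq> VV" using insert.prems by auto
  obtain c1 where c1: "chip x \<approx> chip p + AC c1" using rep_chip[OF xV] by blast
  obtain c2 where c2: "(\<lambda>y. \<Sum>x\<in>A. D x * chip x y) \<approx> sm (\<Sum>x\<in>A. D x) (chip p) + AC c2"
    using insert.IH[OF AV] by blast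
  have e1: "(\<lambda>y. \<Sum>x\<in>insert x A. D x * chip x y) = sm (D x) (chip x) + (\<lambda>y. \<Sum>x\<in>A. D x * chip x y)"
    using insert by (simp add: fun_eq_iff sm_def)
  have l: "sm (D x) (chip x) + (\<lambda>y. \<Sum>x\<in>A. D x * chip x y) \<approx>
      sm (D x) (chip p + AC c1) + (sm (\<Sum>x\<in>A. D x) (chip p) + AC c2)"
    by (intro le_plus le_sm c1 c2)
  have e2: "sm (D x) (chip p + AC c1) + (sm (\<Sum>x\<in>A. D x) (chip p) + AC c2)
      = sm (\<Sum>x\<in>insert x A. D x) (chip p) + AC (\<lambda>\<alpha>. D x * c1 \<alpha> + c2 \<alpha>)"
    using insert by (simp add: AC_add AC_sm fun_eq_iff sm_def algebra_simps)
  show ?case using l unfolding e1 e2 by blast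
qed

lemma rep: "is_div VV D \<Longrightarrow> \<exists>c. D \<approx> sm (deg VV D) (chip p) + AC c"
proof -
  assume d: "is_div VV D"
  have "D = (\<lambda>y. \<Sum>x\<in>VV. D x * chip x y)"
  proof (rule ext)
    fix y show "D y = (\<Sum>x\<in>VV. D x * chip x y)"
    proof (cases "y \<in> VV")
      case True then show ?thesis using finV by (simp add: chip_def if_distrib[where f="\<lambda>c. _ * c"] sum.delta' cong: if_cong)
    next
      case False
      then have "D y = 0" using d unfolding is_div_def by blast
      moreover have "(\<Sum>x\<in>VV. D x * chip x y) = 0" using False by (intro sum.neutral) (auto simp: chip_def)
      ultimately show ?thesis by simp
    qed
  qed
  then show ?thesis using rep_aux[OF finV order_refl, of D] unfolding deg_def by metis
qed

lemma T1: "is_div VV D \<Longrightarrow> deg VV D \<ge> 2 \<Longrightarrow> equiv_eff VV mm D"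
proof -
  assume d: "is_div VV D" "deg VV D \<ge> 2"
  obtain c where c: "D \<approx> sm (deg VV D) (chip p) + AC c" using rep[OF d(1)] by blast
  obtain E where E: "is_div VV E" "effective E" "sm (deg VV D) (chip p) + AC c \<approx> E"
    using cover[OF d(2)] by blast
  show ?thesis unfolding equiv_eff_def using E le_trans[OF c E(3)] by blast
qed

end


context theta
begin

abbreviation "rk \<equiv> rank VV mm"

lemma R_neg: "deg VV A < 0 \<Longrightarrow> rk A = -1"
  using rank_m1 equiv_eff_neg by blast

lemma ee0: "deg VV A = 0 \<Longrightarrow> equiv_eff VV mm A \<longleftrightarrow> A \<approx> 0"
proof
  assume d: "deg VV A = 0" and "equiv_eff VV mm A"
  then obtain F where F: "is_div VV F" "effective F" "A \<approx> F" unfolding equiv_eff_def by blast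
  have "deg VV F = 0" using le_deg[OF F(3)] d by simp
  then have "F = 0" using eff_deg0 F by blast
  then show "A \<approx> 0" using F by simp
next
  assume "A \<approx> 0" then show "equiv_eff VV mm A" by (intro equiv_eff_I[of A 0]) auto
qed

lemma ee1: "deg VV A = 1 \<Longrightarrow> equiv_eff VV mm A \<longleftrightarrow> (\<exists>y\<in>VV. A \<approx> chip y)"
proof
  assume d: "deg VV A = 1" and "equiv_eff VV mm A"
  then obtain F where F: "is_div VV F" "effective F" "A \<approx> F" unfolding equiv_eff_def by blast
  have "deg VV F = 1" using le_deg[OF F(3)] d by simp
  then obtain y where "y \<in> VV" "F = chip y" using eff_deg1 F by blast
  then show "\<exists>y\<in>VV. A \<approx> chip y" using F by blast
next
  assume "\<exists>y\<in>VV. A \<approx> chip y"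
  then obtain y where "y \<in> VV" "A \<approx> chip y" by blast
  then show "equiv_eff VV mm A" by (intro equiv_eff_I[of A "chip y"]) auto
qed

lemma notP1: "deg VV A \<le> 0 \<Longrightarrow> \<not> P A 1"
proof
  assume d: "deg VV A \<le> 0" and "P A 1"
  then have "is_div VV (chip p) \<and> effective (chip p) \<and> deg VV (chip p) = int 1 \<longrightarrow> equiv_eff VV mm (A - chip p)"
    unfolding P_def by blast
  then have "equiv_eff VV mm (A - chip p)" by simp
  moreover have "deg VV (A - chip p) < 0" using d by simp
  ultimately show False using equiv_eff_neg by blast
qed

lemma R0: "deg VV A = 0 \<Longrightarrow> rk A = (if A \<approx> 0 then 0 else -1)"
proof -
  assume d: "deg VV A = 0"
  have "\<not> int 1 \<le> rk A" unfolding rank_ge using notP1[of A] d by simp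
  moreover have "0 \<le> rk A \<longleftrightarrow> A \<approx> 0" using rank_ge0 ee0[OF d] by simp
  ultimately show ?thesis using rank_ge_m1[of A] by auto
qed

lemma R_ub1: "deg VV A = 1 \<Longrightarrow> rk A \<le> 0"
proof (rule ccontr)
  assume d: "deg VV A = 1" and "\<not> rk A \<le> 0"
  then have "int 1 \<le> rk A" by simp
  then have P1: "P A 1" using rank_ge by blast
  have "equiv_eff VV mm (A - chip x)" if "x \<in> VV" for x
  proof -
    have "is_div VV (chip x) \<and> effective (chip x) \<and> deg VV (chip x) = int 1 \<longrightarrow> equiv_eff VV mm (A - chip x)"
      using P1 unfolding P_def by blast
    then show ?thesis using that by simp
  qed
  then have "A - chip p \<approx> 0" "A - chip q \<approx> 0" using ee0 d by simp_all
  then have "A \<approx> chip p" "A \<approx> chip q" using le_shift by blast+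
  then have "chip p \<approx> chip q" by (meson le_sym le_trans)
  then have "p = q" using N1[OF p_in q_in] by simp
  then show False by simp
qed

lemma R1: "deg VV A = 1 \<Longrightarrow> rk A = (if equiv_eff VV mm A then 0 else -1)"
proof (cases "equiv_eff VV mm A")
  case True
  assume "deg VV A = 1"
  then have "rk A \<le> 0" by (rule R_ub1)
  moreover have "0 \<le> rk A" using True rank_ge0 by blast
  ultimately show ?thesis using True by simp
next
  case False then show ?thesis using rank_m1 by simp
qed

lemma R_lb: "is_div VV A \<Longrightarrow> deg VV A \<ge> 2 \<Longrightarrow> rk A \<ge> deg VV A - 2"
proof -
  assume a: "is_div VV A" "deg VV A \<ge> 2"
  have "P A (nat (deg VV A - 2))" unfolding P_def
  proof (intro allI impI)
    fix E assume E: "is_div VV E \<and> effective E \<and> deg VV E = int (nat (deg VV A - 2))"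
    show "equiv_eff VV mm (A - E)" using E a by (intro T1) auto
  qed
  then have "int (nat (deg VV A - 2)) \<le> rk A" using rank_ge by blast
  then show ?thesis using a(2) by simp
qed

lemma R_add_n: "x \<in> VV \<Longrightarrow> rk (A + sm (int n) (chip x)) \<le> rk A + int n"
proof (induction n)
  case 0 then show ?case by simp
next
  case (Suc n)
  have e: "A + sm (int (Suc n)) (chip x) = (A + sm (int n) (chip x)) + chip x"
    by (simp add: fun_eq_iff sm_def algebra_simps)
  have "int (Suc n) = int n + 1" by simp
  then show ?case unfolding e using rank_add_chip2[OF Suc.prems, of "A + sm (int n) (chip x)"] Suc.IH[OF Suc.prems]
    by linarith
qed

end

locale rigid = theta +
  fixes u v :: "nat \<times> nat"
  assumes uV: "u \<in> th_V n0 n1 n2" and vV: "v \<in> th_V n0 n1 n2"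
    and rig: "rigidly_marked (th_V n0 n1 n2) (th_mult n0 n1 n2) u v"
begin

lemma r_uv: "rk (chip u + chip v) = 0"
  using rig unfolding rigidly_marked_def by blast

lemma R_ub: assumes "is_div VV A" "deg VV A \<ge> 3" shows "rk A \<le> deg VV A - 2"
proof (rule ccontr)
  assume "\<not> rk A \<le> deg VV A - 2"
  then have ge: "int (nat (deg VV A - 1)) \<le> rk A" using assms by simp
  define k where "k = nat (deg VV A - 1)"
  have k2: "k \<ge> 2" using assms unfolding k_def by simp
  have Pk: "P A k" using ge rank_ge unfolding k_def by blast
  define E where "E = chip u + chip v + sm (int (k - 2)) (chip u)"
  have Ed: "is_div VV E" "effective E" "deg VV E = int k"
    unfolding E_def using uV vV k2 by (auto simp: of_nat_diff)
  then have "equiv_eff VV mm (A - E)" using Pk unfolding P_def by blast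
  moreover have "deg VV (A - E) = 1" using Ed assms unfolding k_def by simp
  ultimately obtain w where w: "w \<in> VV" "A - E \<approx> chip w" using ee1 by blast
  have "A \<approx> E + chip w"
  proof -
    have "A - E + E \<approx> chip w + E" using le_plus[OF w(2) le_refl] .
    then show ?thesis by (simp add: add.commute)
  qed
  then have "rk A = rk (E + chip w)" by (rule rank_cong)
  also have "\<dots> \<le> rk E + 1" using rank_add_chip2[OF w(1)] .
  also have "rk E \<le> rk (chip u + chip v) + int (k - 2)" unfolding E_def using R_add_n[OF uV] .
  finally have "rk A \<le> int (k - 2) + 1" using r_uv by simp
  then show False using ge k2 unfolding k_def by simp
qed

lemma R_ex: "is_div VV A \<Longrightarrow> deg VV A \<ge> 3 \<Longrightarrow> rk A = deg VV A - 2"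
  using R_ub R_lb by fastforce

lemma R2: "is_div VV A \<Longrightarrow> deg VV A = 2 \<Longrightarrow> 0 \<le> rk A \<and> rk A \<le> 1"
proof -
  assume a: "is_div VV A" "deg VV A = 2"
  have "rk A \<ge> 0" using R_lb[OF a(1)] a(2) by simp
  moreover have "rk A \<le> rk (A + chip p)" by (rule rank_add_chip1) simp
  moreover have "rk (A + chip p) = 1" using R_ex[of "A + chip p"] a by simp
  ultimately show ?thesis by simp
qed

lemma R2K: assumes a: "is_div VV A" "deg VV A = 2" "rk A \<ge> 1" shows "A \<approx> chip p + chip q"
proof -
  have P1: "P A 1" using a(3) rank_ge by (metis of_nat_1)
  have "equiv_eff VV mm (A - chip x)" if "x \<in> VV" for x
  proof -
    have "is_div VV (chip x) \<and> effective (chip x) \<and> deg VV (chip x) = int 1 \<longrightarrow> equiv_eff VV mm (A - chip x)"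
      using P1 unfolding P_def by blast
    then show ?thesis using that by simp
  qed
  then obtain g1 g2 where g: "g1 \<in> VV" "A - chip p \<approx> chip g1" "g2 \<in> VV" "A - chip q \<approx> chip g2"
    using ee1 a(2) by (metis deg_diff deg_chip p_in q_in diff_numeral_special(9) numeral_One one_plus_numeral numeral_plus_one semiring_norm(2) add_diff_cancel_right')
  have A1: "A \<approx> chip p + chip g1"
  proof -
    have "A - chip p + chip p \<approx> chip g1 + chip p" using le_plus[OF g(2) le_refl] .
    then show ?thesis by (simp add: add.commute)
  qed
  have A2: "A \<approx> chip q + chip g2"
  proof -
    have "A - chip q + chip q \<approx> chip g2 + chip q" using le_plus[OF g(4) le_refl] .
    then show ?thesis by (simp add: add.commute)
  qed
  have "chip p + chip g1 \<approx> chip q + chip g2" using le_trans[OF le_sym[OF A1] A2] .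
  then have "g1 = q" using NK g by blast
  then show ?thesis using A1 by simp
qed

lemma RK: "rk (chip p + chip q) = 1"
proof -
  have "P (chip p + chip q) 1" unfolding P_def
  proof (intro allI impI)
    fix E assume E: "is_div VV E \<and> effective E \<and> deg VV E = int 1"
    then have "is_div VV E" "effective E" "deg VV E = 1" by auto
    then obtain z where z: "z \<in> VV" "E = chip z" using eff_deg1 by blast
    have "chip z + chip (bar z) - chip z \<approx> chip p + chip q - chip z"
      using le_minus[OF bar_K[OF z(1)] le_refl] .
    then have "chip p + chip q - chip z \<approx> chip (bar z)" by (simp add: le_sym)
    then show "equiv_eff VV mm (chip p + chip q - E)"
      using z bar_in[OF z(1)] by (intro equiv_eff_I[of _ "chip (bar z)"]) auto
  qed
  then have "int 1 \<le> rk (chip p + chip q)" using rank_ge by blast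
  moreover have "rk (chip p + chip q) \<le> 1" using R2[of "chip p + chip q"] by simp
  ultimately show ?thesis by simp
qed

lemma RKx: "x \<in> VV \<Longrightarrow> rk (chip x + chip (bar x)) = 1"
  using RK rank_cong[OF bar_K] by simp

lemma bar_u_ne_v: "bar u \<noteq> v"
proof
  assume "bar u = v"
  then have "rk (chip u + chip v) = 1" using RKx[OF uV] by simp
  then show False using r_uv by simp
qed

end


lemma deg_uminus[simp]: "deg V (- A) = - deg V A"
  by (simp add: deg_def sum_negf)

locale rigD = rigid +
  fixes D :: "nat \<times> nat \<Rightarrow> int"
  assumes Ddiv: "is_div (th_V n0 n1 n2) D" and Ddeg: "deg (th_V n0 n1 n2) D = 2"
begin

definition "XX t = D + (\<lambda>x. t * (chip u x - chip v x))"
definition "C1 t \<longleftrightarrow> XX t \<approx> (\<lambda>x. 2 * chip u x)"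
definition "C2 t \<longleftrightarrow> (\<exists>w\<in>VV. w \<noteq> u \<and> w \<noteq> v \<and> XX t \<approx> chip u + chip w)"
definition "C3 t \<longleftrightarrow> (\<exists>w\<in>VV. w \<noteq> bar u \<and> w \<noteq> bar v \<and> XX t \<approx> chip v + chip w)"
definition "C4 t \<longleftrightarrow> XX t \<approx> chip v + chip (bar u)"
definition "ff t = (if C1 t then t - 2 else if C2 t then t - 1 else if C3 t then t + 1
    else if C4 t then t + 2 else t)"
definition "EE a b = D + (\<lambda>x. a * chip u x) - (\<lambda>x. b * chip v x)"
abbreviation "Dl \<equiv> Delta VV mm u v"

lemma twou: "(\<lambda>x. 2 * chip u x) = chip u + chip u"
  by (simp add: fun_eq_iff)

lemma XX_sm: "XX t = D + sm t (chip u - chip v)"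
  by (simp add: XX_def sm_def fun_eq_iff)

lemma XX_div: "is_div VV (XX t)" unfolding XX_sm using Ddiv uV vV by simp
lemma XX_deg: "deg VV (XX t) = 2" unfolding XX_sm using Ddeg uV vV by simp

lemma EE_X: "EE (t + j) t = XX t + sm j (chip u)"
  by (simp add: EE_def XX_def sm_def fun_eq_iff algebra_simps)

lemma EE_div: "is_div VV (EE a b)"
proof -
  have "EE a b = D + sm a (chip u) - sm b (chip v)" by (simp add: EE_def sm_def fun_eq_iff)
  then show ?thesis using Ddiv uV vV by simp
qed

lemma EE_deg: "deg VV (EE a b) = 2 + a - b"
proof -
  have "EE a b = D + sm a (chip u) - sm b (chip v)" by (simp add: EE_def sm_def fun_eq_iff)
  then show ?thesis using Ddeg uV vV by simp
qed

lemma Dl_def2: "Dl A = rk A - rk (A - chip u) - rk (A - chip v) + rk (A - chip u - chip v)"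
  by (simp add: Delta_def)

lemma Dl_cong: "A \<approx> B \<Longrightarrow> Dl A = Dl B"
proof -
  assume ab: "A \<approx> B"
  have "rk A = rk B" by (rule rank_cong[OF ab])
  moreover have "rk (A - chip u) = rk (B - chip u)" by (rule rank_cong[OF le_minus[OF ab le_refl]])
  moreover have "rk (A - chip v) = rk (B - chip v)" by (rule rank_cong[OF le_minus[OF ab le_refl]])
  moreover have "rk (A - chip u - chip v) = rk (B - chip u - chip v)"
    by (rule rank_cong[OF le_minus[OF le_minus[OF ab le_refl] le_refl]])
  ultimately show ?thesis unfolding Dl_def2 by simp
qed

lemma le_add_right: "A - B \<approx> C \<Longrightarrow> A \<approx> B + C"
proof -
  assume "A - B \<approx> C"
  then have "A - B + B \<approx> C + B" using le_plus[OF _ le_refl] by blast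
  then show ?thesis by (simp add: add.commute)
qed

lemma le_sub_right: "A \<approx> B + C \<Longrightarrow> A - B \<approx> C"
proof -
  assume "A \<approx> B + C"
  then have "A - B \<approx> B + C - B" using le_minus[OF _ le_refl] by blast
  then show ?thesis by simp
qed

lemma rk_vtx: "w \<in> VV \<Longrightarrow> rk (chip w) = 0"
  using R1[of "chip w"] by (simp add: equiv_eff_I[of "chip w" "chip w"])

lemma rk_diff: "w \<in> VV \<Longrightarrow> x \<in> VV \<Longrightarrow> w \<noteq> x \<Longrightarrow> rk (chip w - chip x) = -1"
proof -
  assume a: "w \<in> VV" "x \<in> VV" "w \<noteq> x"
  have "\<not> chip w - chip x \<approx> 0"
  proof
    assume "chip w - chip x \<approx> 0"
    then have "chip w \<approx> chip x" using le_shift by blast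
    then show False using N1 a by blast
  qed
  then show ?thesis using R0[of "chip w - chip x"] a by simp
qed

lemma rk_neg: "deg VV A < 0 \<Longrightarrow> rk A = -1" by (rule R_neg)

lemma CL1: assumes "\<not> C1 t" "\<not> C2 t" shows "rk (XX t) \<le> 0"
proof (rule ccontr)
  assume "\<not> rk (XX t) \<le> 0"
  then have "int 1 \<le> rk (XX t)" by simp
  then have P1: "P (XX t) 1" using rank_ge by blast
  have "is_div VV (chip u) \<and> effective (chip u) \<and> deg VV (chip u) = int 1 \<longrightarrow> equiv_eff VV mm (XX t - chip u)"
    using P1 unfolding P_def by blast
  then have "equiv_eff VV mm (XX t - chip u)" using uV by simp
  moreover have "deg VV (XX t - chip u) = 1" using XX_deg uV by simp
  ultimately obtain y where y: "y \<in> VV" "XX t - chip u \<approx> chip y" using ee1 by blast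
  have X: "XX t \<approx> chip u + chip y" using y(2) by (rule le_add_right)
  show False
  proof (cases "y = u")
    case True then show False using assms(1) X unfolding C1_def twou by simp
  next
    case F1: False
    show False
    proof (cases "y = v")
      case True
      then have "rk (XX t) = 0" using rank_cong[OF X] r_uv by simp
      then show False using \<open>int 1 \<le> rk (XX t)\<close> by simp
    next
      case False then show False using assms(2) X y F1 unfolding C2_def by blast
    qed
  qed
qed

lemma rkX0: "\<not> C1 t \<Longrightarrow> \<not> C2 t \<Longrightarrow> rk (XX t) = 0"
proof -
  assume "\<not> C1 t" "\<not> C2 t"
  then have "rk (XX t) \<le> 0" by (rule CL1)
  moreover have "0 \<le> rk (XX t)" using R2[OF XX_div[of t] XX_deg[of t]] by simp
  ultimately show ?thesis by simp
qed

lemma CL2: assumes "\<not> C3 t" "\<not> C4 t" shows "\<not> XX t \<approx> chip u + chip v"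
proof
  assume X: "XX t \<approx> chip u + chip v"
  have X': "XX t \<approx> chip v + chip u" using X by (simp add: add.commute)
  show False
  proof (cases "u = bar u")
    case True then show False using assms(2) X' unfolding C4_def by simp
  next
    case F1: False
    show False
    proof (cases "u = bar v")
      case True
      then have "bar u = v" using bar_bar[OF vV] by simp
      then show False using bar_u_ne_v by simp
    next
      case False then show False using assms(1) X' uV F1 unfolding C3_def by blast
    qed
  qed
qed

lemma case1: "C1 t \<Longrightarrow> Dl (EE (ff t) t) = 1"
proof -
  assume c: "C1 t"
  have e: "EE (ff t) t = XX t + sm (-2) (chip u)" using EE_X[of t "-2"] c by (simp add: ff_def)
  have "XX t + sm (-2) (chip u) \<approx> (\<lambda>x. 2 * chip u x) + sm (-2) (chip u)"
    using c unfolding C1_def by (intro le_plus le_refl)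
  moreover have "(\<lambda>x. 2 * chip u x) + sm (-2) (chip u) = 0" by (simp add: sm_def fun_eq_iff)
  ultimately have "EE (ff t) t \<approx> 0" using e by simp
  then have "Dl (EE (ff t) t) = Dl 0" by (rule Dl_cong)
  also have "\<dots> = 1"
  proof -
    have "rk 0 = 0" using R0[of 0] by simp
    moreover have "rk (0 - chip u) = -1" using uV by (intro rk_neg) simp
    moreover have "rk (0 - chip v) = -1" using vV by (intro rk_neg) simp
    moreover have "rk (0 - chip u - chip v) = -1" using uV vV by (intro rk_neg) simp
    ultimately show ?thesis unfolding Dl_def2 by simp
  qed
  finally show ?thesis .
qed

lemma case2: "\<not> C1 t \<Longrightarrow> C2 t \<Longrightarrow> Dl (EE (ff t) t) = 1"
proof -
  assume c: "\<not> C1 t" "C2 t"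
  then obtain w where w: "w \<in> VV" "w \<noteq> u" "w \<noteq> v" "XX t \<approx> chip u + chip w" unfolding C2_def by blast
  have e: "EE (ff t) t = XX t + sm (-1) (chip u)" using EE_X[of t "-1"] c by (simp add: ff_def)
  have "XX t + sm (-1) (chip u) = XX t - chip u" by (simp add: sm_def fun_eq_iff)
  then have "EE (ff t) t \<approx> chip w" using le_sub_right[OF w(4)] e by simp
  then have "Dl (EE (ff t) t) = Dl (chip w)" by (rule Dl_cong)
  also have "\<dots> = 1"
  proof -
    have "rk (chip w) = 0" using rk_vtx w by simp
    moreover have "rk (chip w - chip u) = -1" using rk_diff w uV by simp
    moreover have "rk (chip w - chip v) = -1" using rk_diff w vV by simp
    moreover have "rk (chip w - chip u - chip v) = -1" using uV vV w by (intro rk_neg) simp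
    ultimately show ?thesis unfolding Dl_def2 by simp
  qed
  finally show ?thesis .
qed

lemma case3: "\<not> C1 t \<Longrightarrow> \<not> C2 t \<Longrightarrow> C3 t \<Longrightarrow> Dl (EE (ff t) t) = 1"
proof -
  assume c: "\<not> C1 t" "\<not> C2 t" "C3 t"
  then obtain w where w: "w \<in> VV" "w \<noteq> bar u" "w \<noteq> bar v" "XX t \<approx> chip v + chip w" unfolding C3_def by blast
  have e: "EE (ff t) t = XX t + chip u" using EE_X[of t 1] c by (simp add: ff_def)
  have r1: "rk (XX t + chip u) = 1" using R_ex[of "XX t + chip u"] XX_div XX_deg uV by simp
  have r2: "rk (XX t + chip u - chip u) = 0" using rkX0 c by simp
  have r3: "rk (XX t + chip u - chip v) = 0"
  proof -
    have "XX t + chip u - chip v \<approx> chip v + chip w + chip u - chip v"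
      using w(4) by (intro le_minus le_plus le_refl)
    moreover have "chip v + chip w + chip u - chip v = chip u + chip w" by (simp add: algebra_simps)
    ultimately have eq: "XX t + chip u - chip v \<approx> chip u + chip w" by simp
    have dv: "is_div VV (chip u + chip w)" "deg VV (chip u + chip w) = 2" using uV w by simp_all
    have "rk (chip u + chip w) \<le> 0"
    proof (rule ccontr)
      assume "\<not> rk (chip u + chip w) \<le> 0"
      then have "chip u + chip w \<approx> chip p + chip q" using R2K[OF dv] by simp
      then have "chip u + chip w \<approx> chip u + chip (bar u)" using le_trans[OF _ le_sym[OF bar_K[OF uV]]] by blast
      then have "chip w \<approx> chip (bar u)" using le_minus[OF _ le_refl, of _ _ "chip u"] by fastforce
      then show False using N1[OF w(1) bar_in[OF uV]] w(2) by blast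
    qed
    then have "rk (chip u + chip w) = 0" using R2[OF dv] by simp
    then show ?thesis using rank_cong[OF eq] by simp
  qed
  have r4: "rk (XX t + chip u - chip u - chip v) = 0"
  proof -
    have "XX t + chip u - chip u - chip v = XX t - chip v" by simp
    moreover have "XX t - chip v \<approx> chip w"
    proof -
      have "XX t - chip v \<approx> chip v + chip w - chip v" using w(4) by (intro le_minus le_refl)
      then show ?thesis by simp
    qed
    ultimately show ?thesis using rank_cong rk_vtx[OF w(1)] by metis
  qed
  show ?thesis unfolding e Dl_def2 using r1 r2 r3 r4 by simp
qed

lemma case4: "\<not> C1 t \<Longrightarrow> \<not> C2 t \<Longrightarrow> \<not> C3 t \<Longrightarrow> C4 t \<Longrightarrow> Dl (EE (ff t) t) = 1"
proof -
  assume c: "\<not> C1 t" "\<not> C2 t" "\<not> C3 t" "C4 t"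
  have e: "EE (ff t) t = XX t + sm 2 (chip u)" using EE_X[of t 2] c by (simp add: ff_def)
  have d: "is_div VV (XX t + sm 2 (chip u))" using XX_div uV by simp
  have dg: "deg VV (XX t + sm 2 (chip u)) = 4" using XX_deg uV by simp
  have r1: "rk (XX t + sm 2 (chip u)) = 2" using R_ex[OF d] dg by simp
  have r2: "rk (XX t + sm 2 (chip u) - chip u) = 1" using R_ex[of "XX t + sm 2 (chip u) - chip u"] d dg uV by simp
  have r3: "rk (XX t + sm 2 (chip u) - chip v) = 1" using R_ex[of "XX t + sm 2 (chip u) - chip v"] d dg vV by simp
  have r4: "rk (XX t + sm 2 (chip u) - chip u - chip v) = 1"
  proof -
    have "XX t + sm 2 (chip u) - chip u - chip v \<approx> chip v + chip (bar u) + sm 2 (chip u) - chip u - chip v"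
      using c(4) unfolding C4_def by (intro le_minus le_plus le_refl)
    moreover have "chip v + chip (bar u) + sm 2 (chip u) - chip u - chip v = chip u + chip (bar u)"
      by (simp add: sm_def fun_eq_iff)
    ultimately show ?thesis using rank_cong RKx[OF uV] by metis
  qed
  show ?thesis unfolding e Dl_def2 using r1 r2 r3 r4 by simp
qed

lemma case5: "\<not> C1 t \<Longrightarrow> \<not> C2 t \<Longrightarrow> \<not> C3 t \<Longrightarrow> \<not> C4 t \<Longrightarrow> Dl (EE (ff t) t) = 1"
proof -
  assume c: "\<not> C1 t" "\<not> C2 t" "\<not> C3 t" "\<not> C4 t"
  have e: "EE (ff t) t = XX t" using EE_X[of t 0] c by (simp add: ff_def)
  have r1: "rk (XX t) = 0" using rkX0 c by simp
  have nuv: "\<not> XX t \<approx> chip u + chip v" using CL2 c by simp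
  have r2: "rk (XX t - chip u) = -1"
  proof -
    have dg: "deg VV (XX t - chip u) = 1" using XX_deg uV by simp
    have "\<not> equiv_eff VV mm (XX t - chip u)"
    proof
      assume "equiv_eff VV mm (XX t - chip u)"
      then obtain y where y: "y \<in> VV" "XX t - chip u \<approx> chip y" using ee1[OF dg] by blast
      have X: "XX t \<approx> chip u + chip y" using y(2) by (rule le_add_right)
      show False
      proof (cases "y = u")
        case True then show False using c(1) X unfolding C1_def twou by simp
      next
        case F1: False
        show False
        proof (cases "y = v")
          case True then show False using nuv X by simp
        next
          case False then show False using c(2) X y F1 unfolding C2_def by blast
        qed
      qed
    qed
    then show ?thesis using R1[OF dg] by simp
  qed
  have r3: "rk (XX t - chip v) = -1"
  proof -
    have dg: "deg VV (XX t - chip v) = 1" using XX_deg vV by simp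
    have "\<not> equiv_eff VV mm (XX t - chip v)"
    proof
      assume "equiv_eff VV mm (XX t - chip v)"
      then obtain y where y: "y \<in> VV" "XX t - chip v \<approx> chip y" using ee1[OF dg] by blast
      have X: "XX t \<approx> chip v + chip y" using y(2) by (rule le_add_right)
      show False
      proof (cases "y = bar u")
        case True then show False using c(4) X unfolding C4_def by simp
      next
        case F1: False
        show False
        proof (cases "y = bar v")
          case False then show False using c(3) X y F1 unfolding C3_def by blast
        next
          case True
          then have "XX t \<approx> chip v + chip (bar v)" using X by simp
          then have "XX t \<approx> chip p + chip q" using le_trans bar_K[OF vV] by blast
          then have X2: "XX t \<approx> chip u + chip (bar u)" using le_trans[OF _ le_sym[OF bar_K[OF uV]]] by blast
          show False
          proof (cases "bar u = u")
            case True then show False using c(1) X2 unfolding C1_def twou by simp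
          next
            case False
            then show False using c(2) X2 bar_in[OF uV] bar_u_ne_v unfolding C2_def by blast
          qed
        qed
      qed
    qed
    then show ?thesis using R1[OF dg] by simp
  qed
  have r4: "rk (XX t - chip u - chip v) = -1"
  proof -
    have dg: "deg VV (XX t - chip u - chip v) = 0" using XX_deg uV vV by simp
    have "\<not> XX t - chip u - chip v \<approx> 0"
    proof
      assume "XX t - chip u - chip v \<approx> 0"
      then have "XX t - chip u - chip v + (chip u + chip v) \<approx> 0 + (chip u + chip v)"
        by (intro le_plus le_refl)
      then have "XX t \<approx> chip u + chip v" by (simp add: algebra_simps)
      then show False using nuv by simp
    qed
    then show ?thesis using R0[OF dg] by simp
  qed
  show ?thesis unfolding e Dl_def2 using r1 r2 r3 r4 by simp
qed

lemma Dl_ff: "Dl (EE (ff t) t) = 1"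
  using case1 case2 case3 case4 case5 by blast

end


context rigD
begin

lemma sub: "Dl (EE a b) \<ge> 0"
proof -
  have "submodular VV mm u v D" using rig Ddiv unfolding rigidly_marked_def by blast
  then have "Dl (D + (\<lambda>x. a * chip u x) + (\<lambda>x. (- b) * chip v x)) \<ge> 0" unfolding submodular_def by blast
  moreover have "D + (\<lambda>x. a * chip u x) + (\<lambda>x. (- b) * chip v x) = EE a b"
    by (simp add: EE_def fun_eq_iff)
  ultimately show ?thesis by simp
qed

lemma d01: "x \<in> VV \<Longrightarrow> 0 \<le> rk A - rk (A - chip x) \<and> rk A - rk (A - chip x) \<le> 1"
proof -
  assume x: "x \<in> VV"
  have "rk (A - chip x) \<le> rk (A - chip x + chip x)" by (rule rank_add_chip1[OF x])
  moreover have "rk (A - chip x + chip x) \<le> rk (A - chip x) + 1" by (rule rank_add_chip2[OF x])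
  moreover have "A - chip x + chip x = A" by simp
  ultimately show ?thesis by simp
qed

definition "gc b a = rk (EE a b) - rk (EE a b - chip v)"
definition "kr a b = rk (EE a b) - rk (EE a b - chip u)"

lemma Dl_col: "Dl (EE a b) = gc b a - gc b (a - 1)"
proof -
  have e1: "EE a b - chip u = EE (a - 1) b" by (simp add: EE_def fun_eq_iff algebra_simps)
  have e2: "EE a b - chip u - chip v = EE (a - 1) b - chip v" by (simp add: EE_def fun_eq_iff algebra_simps)
  show ?thesis unfolding Dl_def2 gc_def e2 e1 by simp
qed

lemma Dl_row: "Dl (EE a b) = kr a b - kr a (b + 1)"
proof -
  have e1: "EE a b - chip v = EE a (b + 1)" by (simp add: EE_def fun_eq_iff algebra_simps)
  have e2: "EE a b - chip u - chip v = EE a (b + 1) - chip u" by (simp add: EE_def fun_eq_iff algebra_simps)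
  show ?thesis unfolding Dl_def2 kr_def e2 e1 by simp
qed

lemma gc01: "0 \<le> gc b a \<and> gc b a \<le> 1" unfolding gc_def using d01[OF vV] .
lemma kr01: "0 \<le> kr a b \<and> kr a b \<le> 1" unfolding kr_def using d01[OF uV] .

lemma gc_mono: "gc b (a - 1) \<le> gc b a" using Dl_col[of a b] sub[of a b] by simp
lemma kr_mono: "kr a (b + 1) \<le> kr a b" using Dl_row[of a b] sub[of a b] by simp

lemma col: "Dl (EE a b) = (if a = ff b then 1 else 0)"
proof -
  define a0 where "a0 = ff b"
  have h: "gc b a0 - gc b (a0 - 1) = 1" using Dl_ff[of b] Dl_col[of a0 b] unfolding a0_def by simp
  then have h1: "gc b a0 = 1" and h0: "gc b (a0 - 1) = 0" using gc01[of b a0] gc01[of b "a0 - 1"] by auto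
  have up: "gc b (a0 + int n) = 1" for n
  proof (induction n)
    case 0 then show ?case using h1 by simp
  next
    case (Suc n)
    have "gc b (a0 + int n) \<le> gc b (a0 + int (Suc n))" using gc_mono[of b "a0 + int (Suc n)"] by simp
    then show ?case using Suc gc01[of b "a0 + int (Suc n)"] by simp
  qed
  have down: "gc b (a0 - 1 - int n) = 0" for n
  proof (induction n)
    case 0 then show ?case using h0 by simp
  next
    case (Suc n)
    have "gc b (a0 - 1 - int (Suc n)) \<le> gc b (a0 - 1 - int n)" using gc_mono[of b "a0 - 1 - int n"] by simp
    then show ?case using Suc gc01[of b "a0 - 1 - int (Suc n)"] by simp
  qed
  show ?thesis
  proof (cases "a = a0")
    case True then show ?thesis using h Dl_col[of a b] unfolding a0_def by simp
  next
    case False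
    show ?thesis
    proof (cases "a > a0")
      case True
      then obtain n where n: "a = a0 + int (Suc n)" by (metis add.commute zless_iff_Suc_zadd)
      have "gc b a = 1" using up[of "Suc n"] n by simp
      moreover have "gc b (a - 1) = 1" using up[of n] n by simp
      ultimately show ?thesis using Dl_col[of a b] False unfolding a0_def by simp
    next
      case F2: False
      then have "a < a0" using False by simp
      then obtain n where n: "a = a0 - 1 - int n" by (metis diff_diff_eq2 diff_less_0_iff_less less_diff_eq zless_iff_Suc_zadd add.commute of_nat_Suc diff_add_cancel int_ops(4) zle_diff1_eq le_add_diff_inverse2 nonneg_int_cases)
      have "gc b a = 0" using down[of n] n by simp
      moreover have "gc b (a - 1) = 0" using down[of "Suc n"] n by simp
      ultimately show ?thesis using Dl_col[of a b] False unfolding a0_def by simp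
    qed
  qed
qed

lemma kr_hi: "b \<le> a - 2 \<Longrightarrow> kr a b = 1"
proof -
  assume b: "b \<le> a - 2"
  have "rk (EE a b) = 2 + a - b - 2" using R_ex[OF EE_div] EE_deg b by simp
  moreover have "rk (EE a b - chip u) = 2 + a - b - 1 - 2"
    using R_ex[of "EE a b - chip u"] EE_div[of a b] EE_deg[of a b] b uV by simp
  ultimately show ?thesis unfolding kr_def by simp
qed

lemma kr_lo: "b \<ge> a + 3 \<Longrightarrow> kr a b = 0"
proof -
  assume b: "b \<ge> a + 3"
  have "rk (EE a b) = -1" using EE_deg b by (intro rk_neg) simp
  moreover have "rk (EE a b - chip u) = -1" using EE_deg[of a b] b uV by (intro rk_neg) simp
  ultimately show ?thesis unfolding kr_def by simp
qed

lemma ff_surj: "\<exists>b. ff b = a"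
proof -
  let ?P = "\<lambda>n::nat. kr a (a - 2 + int n) = 1"
  have "?P 0" using kr_hi by simp
  moreover have "\<not> ?P 5" using kr_lo[of a "a - 2 + 5"] by simp
  ultimately obtain n where n: "?P n" "\<not> ?P (Suc n)" using crossing[of ?P 0 5] by auto
  define b where "b = a - 2 + int n"
  have "kr a b = 1" using n(1) b_def by simp
  moreover have "kr a (b + 1) = 0" using n(2) kr01[of a "b + 1"] unfolding b_def by (simp add: add.assoc)
  ultimately have "Dl (EE a b) = 1" using Dl_row by simp
  then have "a = ff b" using col[of a b] by (simp split: if_splits)
  then show ?thesis by auto
qed

lemma kr_mono2: "kr a (b + 1 + int n) \<le> kr a (b + 1)"
proof (induction n)
  case 0 then show ?case by simp
next
  case (Suc n)
  have "kr a (b + 1 + int (Suc n)) \<le> kr a (b + 1 + int n)" using kr_mono[of a "b + 1 + int n"] by (simp add: add.assoc)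
  then show ?case using Suc by simp
qed

lemma ff_inj_aux: "b1 < b2 \<Longrightarrow> ff b1 \<noteq> ff b2"
proof
  assume lt: "b1 < b2" and eq: "ff b1 = ff b2"
  define a where "a = ff b1"
  have "Dl (EE a b1) = 1" using col[of a b1] unfolding a_def by simp
  then have k1: "kr a (b1 + 1) = 0" using Dl_row[of a b1] kr01[of a b1] kr01[of a "b1 + 1"] by simp
  have "Dl (EE a b2) = 1" using col[of a b2] eq unfolding a_def by simp
  then have k2: "kr a b2 = 1" using Dl_row[of a b2] kr01[of a b2] kr01[of a "b2 + 1"] by simp
  obtain n where n: "b2 = b1 + 1 + int n" using lt by (metis add.commute zless_iff_Suc_zadd of_nat_Suc add.assoc)
  have "kr a b2 \<le> kr a (b1 + 1)" using kr_mono2[of a b1 n] n by simp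
  then show False using k1 k2 by simp
qed

lemma ff_bij: "bij ff"
proof (rule bijI)
  show "inj ff"
  proof (rule injI)
    fix x y assume "ff x = ff y"
    then show "x = y" using ff_inj_aux[of x y] ff_inj_aux[of y x] by (metis linorder_neqE)
  qed
  show "surj ff" using ff_surj by (metis surjI)
qed

lemma trans_eq: "transmission VV mm u v D = ff"
  unfolding transmission_def
proof (rule the_equality)
  show "bij ff \<and> (\<forall>a b. (if ff b = a then 1 else 0) = Dl (D + (\<lambda>x. a * chip u x) - (\<lambda>x. b * chip v x)))"
    using ff_bij col unfolding EE_def by (auto simp: eq_commute)
next
  fix \<tau> assume h: "bij \<tau> \<and> (\<forall>a b. (if \<tau> b = a then 1 else 0) = Dl (D + (\<lambda>x. a * chip u x) - (\<lambda>x. b * chip v x)))"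
  show "\<tau> = ff"
  proof (rule ext)
    fix b
    have "(if \<tau> b = ff b then 1 else 0) = Dl (EE (ff b) b)" using h unfolding EE_def by blast
    then show "\<tau> b = ff b" using Dl_ff[of b] by (simp split: if_splits)
  qed
qed

end

theorem mainTheorem15:
  fixes n0 n1 n2 :: nat and u v :: "nat \<times> nat" and D :: "nat \<times> nat \<Rightarrow> int" and t :: int
  assumes "n0 \<ge> 1" "n1 \<ge> 1" "n2 \<ge> 1"
    and "u \<in> th_V n0 n1 n2" "v \<in> th_V n0 n1 n2"
    and "rigidly_marked (th_V n0 n1 n2) (th_mult n0 n1 n2) u v"
    and "is_div (th_V n0 n1 n2) D" "deg (th_V n0 n1 n2) D = 2"
  shows "let V = th_V n0 n1 n2; m = th_mult n0 n1 n2; bar = th_bar n0 n1 n2;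
             Dt = D + (\<lambda>x. t * (chip u x - chip v x)) in
         transmission V m u v D t =
           (if lin_equiv V m Dt (\<lambda>x. 2 * chip u x) then t - 2
            else if (\<exists>w\<in>V. w \<noteq> u \<and> w \<noteq> v \<and> lin_equiv V m Dt (chip u + chip w)) then t - 1
            else if (\<exists>w\<in>V. w \<noteq> bar u \<and> w \<noteq> bar v \<and> lin_equiv V m Dt (chip v + chip w)) then t + 1
            else if lin_equiv V m Dt (chip v + chip (bar u)) then t + 2
            else t)"
proof -
  interpret rigD n0 n1 n2 u v D
    by unfold_locales (use assms in auto)
  show ?thesis
    unfolding Let_def trans_eq ff_def C1_def C2_def C3_def C4_def XX_def by (rule refl)
qed


end
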